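(* Let $(M,d)$ be a metric space and $Y\subseteq M$. Let $\mathcal{N}$ be a $\sigma$-algebra of subsets of $Y$ containing all Borel subsets of $Y$, and let $\nu$ be a measure on $\mathcal{N}$ with $\nu(Y)<+\infty$. Let $\upsilon_Y\in]0,+\infty[$ and assume that $Y$ is upper $\upsilon_Y$-Ahlfors regular with respect to $Y$. Let $s_1,s_2\in[0,\upsilon_Y[$; if $s_1+s_2=\upsilon_Y$, assume furthermore that $Y$ is strongly upper $\upsilon_Y$-Ahlfors regular with respect to $Y$. Let $K_1\in\mathcal{K}_{s_1,Y\times Y}$ and $K_2\in\mathcal{K}_{s_2,Y\times Y}$. Then: (i) If $s_1+s_2\geq\upsilon_Y$, then for each $(x,y)\in Y^2$ with $x\neq y$ the function $t\mapsto K_1(x,t)K_2(t,y)$ is $\nu$-integrable on $Y$, the function $K_3(x,y)\equiv\int_Y K_1(x,t)K_2(t,y)\,d\nu(t)$ is continuous on $\{(x,y)\in Y^2:x\neq y\}$, and \[ \sup_{x,y\in Y,\,x\neq y}|K_3(x,y)|\,d(x,y)^{s_1+s_2-\upsilon_Y}<+\infty \ \text{ if } s_1+s_2>\upsilon_Y,\qquad \sup_{x,y\in Y,\,x\neq y}|K_3(x,y)|\,(1+|\ln d(x,y)|)^{-1}<+\infty \ \text{ if } s_1+s_2=\upsilon_Y. \] (ii) If $s_1+s_2<\upsilon_Y$, then for each $(x,y)\in Y^2$ the function $t\mapsto K_1(x,t)K_2(t,y)$ is $\nu$-integrable on $Y$, the function $\tilde K_3(x,y)\equiv\int_Y K_1(x,t)K_2(t,y)\,d\nu(t)$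 is continuous on $Y^2$, and \[ \sup_{(x,y)\in Y^2}|\tilde K_3(x,y)|\,\bigl(1+d(x,y)^{\upsilon_Y-(s_1+s_2)}\bigr)^{-1}<+\infty. \]
   Context: For $\xi\in M$, $r>0$, $B(\xi,r)=\{\eta\in M: d(\xi,\eta)<r\}$, and $B(\xi,0)=\emptyset$. $Y$ is upper $\upsilon$-Ahlfors regular with respect to $Y$ if there exist $r_0\in]0,+\infty]$, $c_0\in]0,+\infty[$ with $\nu(B(x,r)\cap Y)\leq c_0r^{\upsilon}$ for all $x\in Y$, $r\in]0,r_0[$; strongly upper $\upsilon$-Ahlfors regular with respect to $Y$ if there exist $r_0\in]0,+\infty]$, $c_0\in]0,+\infty[$ with $\nu((B(x,r_2)\setminus B(x,r_1))\cap Y)\leq c_0(r_2^{\upsilon}-r_1^{\upsilon})$ for all $x\in Y$, $r_1,r_2\in[0,r_0[$, $r_1<r_2$. For $s\in\mathbb{R}$, $\mathcal{K}_{s,Y\times Y}$ is the set of continuous functions $K:\{(x,y)\in Y\times Y: x\neq y\}\to\mathbb{C}$ with $\sup_{x\neq y}|K(x,y)|\,d(x,y)^s<+\infty$. *)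

theory Defs
  imports "HOL-Analysis.Analysis"
begin

definition offdiag :: "'a set \<Rightarrow> ('a \<times> 'a) set" where
  "offdiag Y = {p. fst p \<in> Y \<and> snd p \<in> Y \<and> fst p \<noteq> snd p}"

text \<open>The class K_{s,Y x Y}: kernels continuous off the diagonal with
  sup |K(x,y)| d(x,y)^s finite. Values on the diagonal are irrelevant.\<close>
definition kernel_class :: "real \<Rightarrow> 'a::metric_space set \<Rightarrow> ('a \<Rightarrow> 'a \<Rightarrow> complex) set" where
  "kernel_class s Y = {K. continuous_on (offdiag Y) (\<lambda>p. K (fst p) (snd p)) \<and>
      (\<exists>C. \<forall>x\<in>Y. \<forall>y\<in>Y. x \<noteq> y \<longrightarrow> cmod (K x y) * dist x y powr s \<le> C)}"

definition upper_ahlfors_regular :: "'a::metric_space measure \<Rightarrow> 'a set \<Rightarrow> real \<Rightarrow> bool" where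
  "upper_ahlfors_regular nu Y ups \<longleftrightarrow>
     (\<exists>r0::ereal. \<exists>c0::real. r0 > 0 \<and> c0 > 0 \<and>
       (\<forall>x\<in>Y. \<forall>r. 0 < r \<and> ereal r < r0 \<longrightarrow>
          emeasure nu (ball x r \<inter> Y) \<le> ennreal (c0 * r powr ups)))"

definition strongly_upper_ahlfors_regular :: "'a::metric_space measure \<Rightarrow> 'a set \<Rightarrow> real \<Rightarrow> bool" where
  "strongly_upper_ahlfors_regular nu Y ups \<longleftrightarrow>
     (\<exists>r0::ereal. \<exists>c0::real. r0 > 0 \<and> c0 > 0 \<and>
       (\<forall>x\<in>Y. \<forall>r1 r2. 0 \<le> r1 \<and> r1 < r2 \<and> ereal r2 < r0 \<longrightarrow>
          emeasure nu ((ball x r2 - ball x r1) \<inter> Y) \<le> ennreal (c0 * (r2 powr ups - r1 powr ups))))"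

end

theory Submission
  imports Defs
begin



lemma small_powr_aux:
  fixes c e a :: real
  assumes "0 < e" "0 < a"
  shows "\<exists>\<eta>>0. \<forall>r. 0 < r \<and> r \<le> \<eta> \<longrightarrow> c * r powr a \<le> e"
proof -
  define \<eta> where "\<eta> = (e / (\<bar>c\<bar> + 1)) powr (1/a)"
  have pos: "\<eta> > 0" using assms by (simp add: \<eta>_def)
  have eta_a: "\<eta> powr a = e / (\<bar>c\<bar> + 1)"
    using assms by (simp add: \<eta>_def powr_powr)
  show ?thesis
  proof (intro exI[of _ \<eta>] conjI allI impI pos)
    fix r :: real assume r: "0 < r \<and> r \<le> \<eta>"
    have "r powr a \<le> \<eta> powr a" using r assms by (intro powr_mono2) auto
    hence "c * r powr a \<le> \<bar>c\<bar> * (e / (\<bar>c\<bar> + 1))"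
      by (metis abs_ge_self abs_ge_zero eta_a mult_mono powr_ge_zero)
    also have "\<dots> \<le> e" using assms by (simp add: field_simps)
    finally show "c * r powr a \<le> e" .
  qed
qed


lemma pow_powr: "0 < (h::real) \<Longrightarrow> (h ^ k) powr a = (h powr a) ^ k"
  by (simp add: powr_realpow[symmetric] powr_powr powr_power mult.commute)

lemma dyadic_identity:
  fixes \<rho> s ups c0 :: real and k :: nat
  assumes "0 < \<rho>"
  shows "(\<rho> * (1/2) ^ Suc k) powr (-s) * (c0 * (\<rho> * (1/2) ^ k) powr ups)
       = c0 * 2 powr s * \<rho> powr (ups - s) * (((1/2) powr (ups - s)) ^ k)"
proof -
  have h: "(1/2::real) powr (-s) = 2 powr s" by (simp add: powr_minus_divide powr_divide)
  have e1: "\<rho> powr (ups - s) = \<rho> powr ups * \<rho> powr (-s)" by (simp add: powr_add[symmetric])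
  have e2: "(1/2::real) powr (ups - s) = (1/2) powr ups * (1/2) powr (-s)" by (simp add: powr_add[symmetric])
  show ?thesis using assms
    by (simp add: powr_mult pow_powr e1 e2 power_mult_distrib h[symmetric] del: power_Suc)
       (simp add: algebra_simps)
qed
lemma cont_param_integral:
  fixes M :: "'b measure" and P :: "'p::metric_space set" and F :: "'p \<Rightarrow> 'b \<Rightarrow> complex"
  assumes fin: "finite_measure M"
    and int: "\<And>p. p \<in> P \<Longrightarrow> integrable M (F p)"
    and loc: "\<And>p0 e. p0 \<in> P \<Longrightarrow> e > 0 \<Longrightarrow> \<exists>\<delta>>0. \<exists>S\<in>sets M. \<exists>B.
        (\<forall>p\<in>P. dist p p0 < \<delta> \<longrightarrow> (\<integral>\<^sup>+t. indicator S t * ennreal (norm (F p t)) \<partial>M) \<le> ennreal e) \<and>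
        (\<forall>p\<in>P. dist p p0 < \<delta> \<longrightarrow> (\<forall>t\<in>space M - S. norm (F p t) \<le> B)) \<and>
        (\<forall>t\<in>space M - S. \<forall>u. (\<forall>n. u n \<in> P \<and> dist (u n) p0 < \<delta>) \<longrightarrow> u \<longlonglongrightarrow> p0 \<longrightarrow> (\<lambda>n. F (u n) t) \<longlonglongrightarrow> F p0 t)"
  shows "continuous_on P (\<lambda>p. LINT t|M. F p t)"
proof (rule continuous_on_sequentiallyI)
  fix u a assume uP: "\<forall>n. u n \<in> P" and aP: "a \<in> P" and ua: "u \<longlonglongrightarrow> a"
  show "(\<lambda>n. LINT t|M. F (u n) t) \<longlonglongrightarrow> (LINT t|M. F a t)"
  proof (rule metric_LIMSEQ_I)
    fix r :: real assume r: "0 < r"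
    define e where "e = r / 4"
    have e: "e > 0" using r by (simp add: e_def)
    from loc[OF aP e] obtain \<delta> S B where \<delta>: "\<delta> > 0" and S: "S \<in> sets M"
      and near: "\<And>p. p\<in>P \<Longrightarrow> dist p a < \<delta> \<Longrightarrow> (\<integral>\<^sup>+t. indicator S t * ennreal (norm (F p t)) \<partial>M) \<le> ennreal e"
      and far: "\<And>p t. p\<in>P \<Longrightarrow> dist p a < \<delta> \<Longrightarrow> t\<in>space M - S \<Longrightarrow> norm (F p t) \<le> B"
      and conv: "\<And>t u. t\<in>space M - S \<Longrightarrow> (\<forall>n. u n \<in> P \<and> dist (u n) a < \<delta>) \<Longrightarrow> u \<longlonglongrightarrow> a \<Longrightarrow> (\<lambda>n. F (u n) t) \<longlonglongrightarrow> F a t"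
      by blast
    obtain N where N: "\<And>n. n \<ge> N \<Longrightarrow> dist (u n) a < \<delta>"
      using ua \<delta> by (meson metric_LIMSEQ_D)
    define G where "G p = (LINT t|M. indicator (space M - S) t *\<^sub>R F p t)" for p
    have Gdiff: "norm ((LINT t|M. F p t) - G p) \<le> e" if p: "p \<in> P" "dist p a < \<delta>" for p
    proof -
      have i1: "integrable M (F p)" using int p by auto
      have i2: "integrable M (\<lambda>t. indicator (space M - S) t *\<^sub>R F p t)"
        using i1 S by (intro integrable_mult_indicator) auto
      have "(LINT t|M. F p t) - G p = (LINT t|M. F p t - indicator (space M - S) t *\<^sub>R F p t)"
        unfolding G_def using i1 i2 by simp
      also have "norm \<dots> \<le> (\<integral>\<^sup>+t. norm (F p t - indicator (space M - S) t *\<^sub>R F p t) \<partial>M)"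
        using i1 i2 by (intro integral_norm_bound_ennreal) auto
      also have "\<dots> = (\<integral>\<^sup>+t. indicator S t * ennreal (norm (F p t)) \<partial>M)"
        by (intro nn_integral_cong) (auto simp: indicator_def)
      also have "\<dots> \<le> ennreal e" using near p by auto
      finally show ?thesis using e by (simp add: ennreal_le_iff)
    qed
    have GN: "(\<lambda>n. G (u (n + N))) \<longlonglongrightarrow> G a"
      unfolding G_def
    proof (rule integral_dominated_convergence[where w = "\<lambda>_. max B 0"])
      show "(\<lambda>t. indicator (space M - S) t *\<^sub>R F a t) \<in> borel_measurable M"
        using int[OF aP] S by (intro borel_measurable_scaleR) auto
      show "(\<lambda>t. indicator (space M - S) t *\<^sub>R F (u (n + N)) t) \<in> borel_measurable M" for n
        using int uP S by (intro borel_measurable_scaleR) auto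
      show "integrable M (\<lambda>_. max B 0)"
        using fin finite_measure.integrable_const by blast
      show "AE t in M. (\<lambda>n. indicator (space M - S) t *\<^sub>R F (u (n + N)) t) \<longlonglongrightarrow> indicator (space M - S) t *\<^sub>R F a t"
      proof (rule AE_I2)
        fix t assume t: "t \<in> space M"
        show "(\<lambda>n. indicator (space M - S) t *\<^sub>R F (u (n + N)) t) \<longlonglongrightarrow> indicator (space M - S) t *\<^sub>R F a t"
        proof (cases "t \<in> S")
          case True thus ?thesis by simp
        next
          case False
          have "(\<lambda>n. F (u (n + N)) t) \<longlonglongrightarrow> F a t"
            using t False uP N ua by (intro conv) (auto intro: LIMSEQ_ignore_initial_segment)
          thus ?thesis using False t by simp
        qed
      qed
      show "AE t in M. norm (indicator (space M - S) t *\<^sub>R F (u (n + N)) t) \<le> max B 0" for n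
      proof (rule AE_I2)
        fix t assume t: "t \<in> space M"
        show "norm (indicator (space M - S) t *\<^sub>R F (u (n + N)) t) \<le> max B 0"
        proof (cases "t \<in> S")
          case True thus ?thesis by simp
        next
          case False
          have "norm (F (u (n + N)) t) \<le> B" using far[of "u (n+N)" t] uP N t False by auto
          thus ?thesis using False t by simp
        qed
      qed
    qed
    then obtain N2 where N2: "\<And>n. n \<ge> N2 \<Longrightarrow> dist (G (u (n + N))) (G a) < e"
      using e by (meson metric_LIMSEQ_D)
    show "\<exists>no. \<forall>n\<ge>no. dist (LINT t|M. F (u n) t) (LINT t|M. F a t) < r"
    proof (intro exI[of _ "N2 + N"] allI impI)
      fix n assume n: "N2 + N \<le> n"
      define m where "m = n - N"
      have nm: "n = m + N" and m: "m \<ge> N2" using n by (auto simp: m_def)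
      have d1: "norm ((LINT t|M. F (u n) t) - G (u n)) \<le> e"
        using Gdiff[of "u n"] uP N n by auto
      have d2: "norm (G (u n) - G a) < e" using N2[OF m] nm by (simp add: dist_norm)
      have d3: "norm ((LINT t|M. F a t) - G a) \<le> e" using Gdiff[OF aP] \<delta> by simp
      have "dist (LINT t|M. F (u n) t) (LINT t|M. F a t)
          = norm (((LINT t|M. F (u n) t) - G (u n)) + (G (u n) - G a) - ((LINT t|M. F a t) - G a))"
        by (simp add: dist_norm)
      also have "\<dots> \<le> norm ((LINT t|M. F (u n) t) - G (u n)) + norm (G (u n) - G a) + norm ((LINT t|M. F a t) - G a)"
        by (meson norm_triangle_ineq norm_triangle_ineq4 order_trans add_mono order_refl)
      also have "\<dots> < 4 * e" using d1 d2 d3 e by linarith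
      finally show "dist (LINT t|M. F (u n) t) (LINT t|M. F a t) < r" by (simp add: e_def)
    qed
  qed
qed


locale ahl_setting =
  fixes nu :: "'a::metric_space measure" and Y :: "'a set" and ups r0 c0 :: real
  assumes space_nu: "space nu = Y"
    and borel_sets: "sets (restrict_space borel Y) \<subseteq> sets nu"
    and fin: "emeasure nu Y < \<infinity>"
    and ups_pos: "0 < ups"
    and r0: "0 < r0" and c0: "0 < c0"
    and ahl: "\<And>x r. x \<in> Y \<Longrightarrow> 0 < r \<Longrightarrow> r < r0 \<Longrightarrow> emeasure nu (ball x r \<inter> Y) \<le> ennreal (c0 * r powr ups)"
begin

lemma finite_nu: "finite_measure nu"
  using fin space_nu by (intro finite_measureI) auto

lemma meas_transfer:
  assumes "f \<in> measurable (restrict_space borel Y) N"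
  shows "f \<in> measurable nu N"
proof (rule measurableI)
  fix x assume "x \<in> space nu"
  thus "f x \<in> space N" using assms space_nu
    by (auto simp: measurable_def space_restrict_space)
next
  fix A assume A: "A \<in> sets N"
  have "f -` A \<inter> space (restrict_space borel Y) \<in> sets (restrict_space borel Y)"
    using assms A by (rule measurable_sets)
  moreover have "space (restrict_space borel Y) = space nu"
    using space_nu by (simp add: space_restrict_space)
  ultimately show "f -` A \<inter> space nu \<in> sets nu" using borel_sets by auto
qed

lemma borel_transfer:
  assumes "f \<in> borel_measurable borel"
  shows "f \<in> borel_measurable nu"
  using assms by (intro meas_transfer measurable_restrict_space1)

lemma set_transfer:
  assumes "A \<in> sets borel"
  shows "A \<inter> Y \<in> sets nu"
proof -
  have "A \<inter> Y \<in> sets (restrict_space borel Y)"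
    using assms by (auto simp: sets_restrict_space)
  thus ?thesis using borel_sets by auto
qed

lemma ball_sets: "ball x r \<inter> Y \<in> sets nu"
  by (intro set_transfer) auto

lemma emeasure_Y: "emeasure nu Y = ennreal (measure nu Y)"
  using fin by (simp add: emeasure_eq_ennreal_measure)

lemma point_null:
  assumes x: "x \<in> Y"
  shows "emeasure nu {x} = 0"
proof -
  have sx: "{x} \<in> sets nu" using set_transfer[of "{x}"] x by auto
  have "measure nu {x} \<le> e" if e: "e > 0" for e
  proof -
    obtain \<eta> where \<eta>: "\<eta> > 0" "\<And>r. 0 < r \<and> r \<le> \<eta> \<Longrightarrow> c0 * r powr ups \<le> e"
      using small_powr_aux[OF e ups_pos] by blast
    define r where "r = min \<eta> (r0/2)"
    have r: "0 < r" "r \<le> \<eta>" "r < r0" using \<eta> r0 by (auto simp: r_def)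
    have "emeasure nu {x} \<le> emeasure nu (ball x r \<inter> Y)"
      using x r ball_sets by (intro emeasure_mono) auto
    also have "\<dots> \<le> ennreal (c0 * r powr ups)" using ahl x r by auto
    also have "\<dots> \<le> ennreal e" using \<eta> r by (intro ennreal_leI) auto
    finally have "ennreal (measure nu {x}) \<le> ennreal e"
      using finite_measure.emeasure_eq_measure[OF finite_nu] by metis
    thus ?thesis using e by (simp add: ennreal_le_iff)
  qed
  hence "measure nu {x} \<le> 0"
    by (metis field_le_epsilon add.left_neutral)
  hence "measure nu {x} = 0" by (simp add: measure_nonneg antisym)
  thus ?thesis using finite_measure.emeasure_eq_measure[OF finite_nu] by simp
qed

lemma AE_neq:
  assumes "x \<in> Y"
  shows "AE t in nu. t \<noteq> x"
proof (rule AE_I'[of "{x}"])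
  show "{x} \<in> null_sets nu" using point_null[OF assms] set_transfer[of "{x}"] assms by auto
qed auto

lemma dyadic_bound:
  fixes f :: "'a \<Rightarrow> ennreal" and R a :: "nat \<Rightarrow> real"
  assumes fm: "f \<in> borel_measurable nu"
    and cover: "\<And>t. t \<in> Y \<Longrightarrow> f t \<noteq> 0 \<Longrightarrow> \<exists>k. t \<in> ball x (R k) \<and> f t \<le> ennreal (a k)"
  shows "(\<integral>\<^sup>+t. f t \<partial>nu) \<le> (\<Sum>k. ennreal (a k) * emeasure nu (ball x (R k) \<inter> Y))"
proof -
  have "(\<integral>\<^sup>+t. f t \<partial>nu) \<le> (\<integral>\<^sup>+t. (\<Sum>k. ennreal (a k) * indicator (ball x (R k) \<inter> Y) t) \<partial>nu)"
  proof (rule nn_integral_mono)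
    fix t assume t: "t \<in> space nu"
    show "f t \<le> (\<Sum>k. ennreal (a k) * indicator (ball x (R k) \<inter> Y) t)"
    proof (cases "f t = 0")
      case True thus ?thesis by simp
    next
      case False
      then obtain k where k: "t \<in> ball x (R k)" "f t \<le> ennreal (a k)" using cover t space_nu by auto
      have "f t \<le> ennreal (a k) * indicator (ball x (R k) \<inter> Y) t" using k t space_nu by (auto simp: indicator_def)
      also have "\<dots> \<le> (\<Sum>j. ennreal (a j) * indicator (ball x (R j) \<inter> Y) t)"
      proof -
        define g where "g j = ennreal (a j) * indicator (ball x (R j) \<inter> Y) t" for j
        have "sum g {k} \<le> suminf g" by (rule sum_le_suminf) auto
        thus ?thesis by (simp add: g_def[symmetric])
      qed
      finally show ?thesis .
    qed
  qed
  also have "\<dots> = (\<Sum>k. (\<integral>\<^sup>+t. ennreal (a k) * indicator (ball x (R k) \<inter> Y) t \<partial>nu))"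
    using ball_sets by (intro nn_integral_suminf) auto
  also have "\<dots> = (\<Sum>k. ennreal (a k) * emeasure nu (ball x (R k) \<inter> Y))"
    using ball_sets by (simp add: nn_integral_cmult_indicator)
  finally show ?thesis .
qed

lemma dist_powr_meas: "(\<lambda>t. ennreal (dist x t powr b) * indicator A t) \<in> borel_measurable nu"
  if "A \<in> sets borel" for A
proof -
  have "(\<lambda>t. ennreal (dist x t powr b) * indicator A t) \<in> borel_measurable borel"
  proof -
    have m1: "(\<lambda>t. dist x t) \<in> borel_measurable borel"
      by (rule borel_measurable_continuous_onI) (intro continuous_intros)
    show ?thesis
      by (intro borel_measurable_times_ennreal measurable_compose[OF _ measurable_ennreal] powr_real_measurable m1 measurable_const borel_measurable_indicator that) simp_all
  qed
  thus ?thesis by (rule borel_transfer)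
qed

lemma inner_est_small:
  assumes s: "0 \<le> s" "s < ups"
  shows "\<exists>C\<ge>0. \<forall>x\<in>Y. \<forall>\<rho>. 0 < \<rho> \<and> \<rho> < r0 \<longrightarrow>
     (\<integral>\<^sup>+t. ennreal (dist x t powr (-s)) * indicator (ball x \<rho>) t \<partial>nu) \<le> ennreal (C * \<rho> powr (ups - s))"
proof -
  define q :: real where "q = (1/2) powr (ups - s)"
  have "(1::real) < 2 powr (ups - s)" using s powr_less_cancel_iff[of 2 0 "ups - s"] by simp
  hence q: "0 < q" "q < 1" by (auto simp: q_def powr_divide)
  define C where "C = c0 * 2 powr s / (1 - q)"
  have C: "C \<ge> 0" using c0 q by (simp add: C_def)
  show ?thesis
  proof (intro exI[of _ C] conjI C ballI allI impI)
    fix x \<rho> assume x: "x \<in> Y" and \<rho>: "0 < \<rho> \<and> \<rho> < r0"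
    define a where "a k = (\<rho> * (1/2) ^ Suc k) powr (-s)" for k :: nat
    have "(\<integral>\<^sup>+t. ennreal (dist x t powr (-s)) * indicator (ball x \<rho>) t \<partial>nu)
        \<le> (\<Sum>k. ennreal (a k) * emeasure nu (ball x (\<rho> * (1/2)^k) \<inter> Y))"
    proof (rule dyadic_bound)
      show "(\<lambda>t. ennreal (dist x t powr (-s)) * indicator (ball x \<rho>) t) \<in> borel_measurable nu"
        by (rule dist_powr_meas) auto
      fix t assume t: "t \<in> Y" and nz: "ennreal (dist x t powr (-s)) * indicator (ball x \<rho>) t \<noteq> 0"
      have tb: "dist x t < \<rho>" and d0: "dist x t > 0" using nz by (auto simp: indicator_def split: if_splits)
      obtain n where n: "(1/2::real) ^ n < dist x t / \<rho>"
        using real_arch_pow_inv[of "dist x t / \<rho>" "1/2"] d0 \<rho> by auto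
      have Pn: "\<rho> * (1/2) ^ n \<le> dist x t" using n \<rho> by (simp add: field_simps)
      obtain k where k: "\<forall>i\<le>k. \<not> \<rho> * (1/2) ^ i \<le> dist x t" "\<rho> * (1/2) ^ Suc k \<le> dist x t"
        using ex_least_nat_less[of "\<lambda>i. \<rho> * (1/2) ^ i \<le> dist x t", OF Pn] tb by auto
      have "t \<in> ball x (\<rho> * (1/2)^k)" using k(1) by auto
      moreover have "dist x t powr (-s) \<le> a k"
        unfolding a_def using k(2) \<rho> s by (intro powr_mono2') auto
      ultimately show "\<exists>k. t \<in> ball x (\<rho> * (1/2)^k) \<and> ennreal (dist x t powr (-s)) * indicator (ball x \<rho>) t \<le> ennreal (a k)"
        by (intro exI[of _ k]) (auto simp: indicator_def intro: ennreal_leI)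
    qed
    also have "\<dots> \<le> (\<Sum>k. ennreal (c0 * 2 powr s * \<rho> powr (ups - s) * q ^ k))"
    proof (rule suminf_le)
      fix k
      have r: "0 < \<rho> * (1/2)^k" "\<rho> * (1/2)^k < r0"
        using \<rho> by (auto simp: power_le_one mult_le_cancel_left1 intro: le_less_trans[of _ \<rho>])
      have "ennreal (a k) * emeasure nu (ball x (\<rho> * (1/2)^k) \<inter> Y) \<le> ennreal (a k) * ennreal (c0 * (\<rho> * (1/2)^k) powr ups)"
        using ahl[OF x r] by (intro mult_left_mono) auto
      also have "\<dots> = ennreal (a k * (c0 * (\<rho> * (1/2)^k) powr ups))"
        using c0 by (subst ennreal_mult) (auto simp: a_def)
      also have "\<dots> = ennreal (c0 * 2 powr s * \<rho> powr (ups - s) * q ^ k)"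
        unfolding a_def q_def using \<rho> by (subst dyadic_identity) auto
      finally show "ennreal (a k) * emeasure nu (ball x (\<rho> * (1/2)^k) \<inter> Y) \<le> ennreal (c0 * 2 powr s * \<rho> powr (ups - s) * q ^ k)" .
    qed auto
    also have "\<dots> = ennreal (\<Sum>k. c0 * 2 powr s * \<rho> powr (ups - s) * q ^ k)"
      using q c0 by (intro suminf_ennreal2 summable_mult summable_geometric) auto
    also have "(\<Sum>k. c0 * 2 powr s * \<rho> powr (ups - s) * q ^ k) = C * \<rho> powr (ups - s)"
      using q by (simp add: suminf_mult suminf_geometric summable_geometric C_def)
    finally show "(\<integral>\<^sup>+t. ennreal (dist x t powr (-s)) * indicator (ball x \<rho>) t \<partial>nu) \<le> ennreal (C * \<rho> powr (ups - s))" .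
  qed
qed

lemma V_nonneg: "0 \<le> measure nu Y" by (rule measure_nonneg)

lemma nn_const_Y: "(\<integral>\<^sup>+t. ennreal c \<partial>nu) = ennreal (c * measure nu Y)" if "0 \<le> c" for c
  using that space_nu emeasure_Y by (simp add: nn_integral_const ennreal_mult)

lemma global_est:
  assumes s: "0 \<le> s" "s < ups"
  shows "\<exists>G\<ge>0. \<forall>x\<in>Y. (\<integral>\<^sup>+t. ennreal (dist x t powr (-s)) \<partial>nu) \<le> ennreal G"
proof -
  obtain C where C: "C \<ge> 0" and Cb: "\<And>x \<rho>. x\<in>Y \<Longrightarrow> 0 < \<rho> \<Longrightarrow> \<rho> < r0 \<Longrightarrow>
     (\<integral>\<^sup>+t. ennreal (dist x t powr (-s)) * indicator (ball x \<rho>) t \<partial>nu) \<le> ennreal (C * \<rho> powr (ups - s))"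
    using inner_est_small[OF s] by blast
  define V where "V = measure nu Y"
  have V: "V \<ge> 0" by (simp add: V_def V_nonneg)
  define G where "G = C * (r0/2) powr (ups-s) + (r0/2) powr (-s) * V"
  show ?thesis
  proof (intro exI[of _ G] conjI ballI)
    show "G \<ge> 0" using C V by (simp add: G_def)
    fix x assume x: "x \<in> Y"
    have "(\<integral>\<^sup>+t. ennreal (dist x t powr (-s)) \<partial>nu)
        \<le> (\<integral>\<^sup>+t. ennreal (dist x t powr (-s)) * indicator (ball x (r0/2)) t + ennreal ((r0/2) powr (-s)) \<partial>nu)"
    proof (rule nn_integral_mono)
      fix t assume t: "t \<in> space nu"
      show "ennreal (dist x t powr (-s)) \<le> ennreal (dist x t powr (-s)) * indicator (ball x (r0/2)) t + ennreal ((r0/2) powr (-s))"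
      proof (cases "t \<in> ball x (r0/2)")
        case True thus ?thesis by simp
      next
        case False
        hence "dist x t \<ge> r0/2" by auto
        hence "dist x t powr (-s) \<le> (r0/2) powr (-s)" using r0 s by (intro powr_mono2') auto
        thus ?thesis using False by (simp add: ennreal_leI)
      qed
    qed
    also have "\<dots> = (\<integral>\<^sup>+t. ennreal (dist x t powr (-s)) * indicator (ball x (r0/2)) t \<partial>nu) + (\<integral>\<^sup>+t. ennreal ((r0/2) powr (-s)) \<partial>nu)"
      by (intro nn_integral_add dist_powr_meas) auto
    also have "\<dots> \<le> ennreal (C * (r0/2) powr (ups - s)) + ennreal ((r0/2) powr (-s) * V)"
      using Cb[OF x, of "r0/2"] r0 nn_const_Y[of "(r0/2) powr (-s)"] by (intro add_mono) (auto simp: V_def simp del: nn_integral_const)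
    also have "\<dots> = ennreal G" using C V by (simp add: G_def ennreal_plus[symmetric] del: ennreal_plus)
    finally show "(\<integral>\<^sup>+t. ennreal (dist x t powr (-s)) \<partial>nu) \<le> ennreal G" .
  qed
qed

lemma inner_est:
  assumes s: "0 \<le> s" "s < ups"
  shows "\<exists>C\<ge>0. \<forall>x\<in>Y. \<forall>\<rho>>0.
     (\<integral>\<^sup>+t. ennreal (dist x t powr (-s)) * indicator (ball x \<rho>) t \<partial>nu) \<le> ennreal (C * \<rho> powr (ups - s))"
proof -
  obtain C where C: "C \<ge> 0" and Cb: "\<And>x \<rho>. x\<in>Y \<Longrightarrow> 0 < \<rho> \<Longrightarrow> \<rho> < r0 \<Longrightarrow>
     (\<integral>\<^sup>+t. ennreal (dist x t powr (-s)) * indicator (ball x \<rho>) t \<partial>nu) \<le> ennreal (C * \<rho> powr (ups - s))"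
    using inner_est_small[OF s] by blast
  obtain G where G: "G \<ge> 0" and Gb: "\<And>x. x\<in>Y \<Longrightarrow> (\<integral>\<^sup>+t. ennreal (dist x t powr (-s)) \<partial>nu) \<le> ennreal G"
    using global_est[OF s] by blast
  define C' where "C' = max C (G * r0 powr (s - ups))"
  show ?thesis
  proof (intro exI[of _ C'] conjI ballI allI impI)
    show "C' \<ge> 0" using C by (simp add: C'_def)
    fix x \<rho> assume x: "x \<in> Y" and \<rho>: "(0::real) < \<rho>"
    show "(\<integral>\<^sup>+t. ennreal (dist x t powr (-s)) * indicator (ball x \<rho>) t \<partial>nu) \<le> ennreal (C' * \<rho> powr (ups - s))"
    proof (cases "\<rho> < r0")
      case True
      have "C * \<rho> powr (ups - s) \<le> C' * \<rho> powr (ups - s)"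
        by (intro mult_right_mono) (auto simp: C'_def)
      thus ?thesis using Cb[OF x \<rho> True] by (meson ennreal_leI order_trans)
    next
      case False
      have "(\<integral>\<^sup>+t. ennreal (dist x t powr (-s)) * indicator (ball x \<rho>) t \<partial>nu) \<le> (\<integral>\<^sup>+t. ennreal (dist x t powr (-s)) \<partial>nu)"
        by (intro nn_integral_mono) (auto simp: indicator_def)
      also have "\<dots> \<le> ennreal G" by (rule Gb[OF x])
      also have "G = G * r0 powr (s - ups) * r0 powr (ups - s)"
        using r0 by (simp add: powr_add[symmetric])
      also have "\<dots> \<le> G * r0 powr (s - ups) * \<rho> powr (ups - s)"
        using False r0 s G by (intro mult_left_mono powr_mono2) auto
      also have "\<dots> \<le> C' * \<rho> powr (ups - s)"
        by (intro mult_right_mono) (auto simp: C'_def)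
      finally show ?thesis by (simp add: ennreal_leI)
    qed
  qed
qed

lemma middle_sum:
  assumes x: "x \<in> Y" and \<rho>: "0 < \<rho>" and \<sigma>: "0 \<le> \<sigma>"
  shows "(\<integral>\<^sup>+t. ennreal (dist x t powr (-\<sigma>)) * indicator (ball x (r0/2) - ball x \<rho>) t \<partial>nu)
     \<le> (\<Sum>k. ennreal (if \<rho> * 2 ^ Suc k < r0 then c0 * 2 powr ups * (\<rho> * 2 ^ k) powr (ups - \<sigma>) else 0))"
proof -
  define a where "a k = (if \<rho> * 2 ^ Suc k < r0 then (\<rho> * 2 ^ k) powr (-\<sigma>) else 0)" for k :: nat
  have "(\<integral>\<^sup>+t. ennreal (dist x t powr (-\<sigma>)) * indicator (ball x (r0/2) - ball x \<rho>) t \<partial>nu)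
      \<le> (\<Sum>k. ennreal (a k) * emeasure nu (ball x (\<rho> * 2 ^ Suc k) \<inter> Y))"
  proof (rule dyadic_bound)
    show "(\<lambda>t. ennreal (dist x t powr (-\<sigma>)) * indicator (ball x (r0/2) - ball x \<rho>) t) \<in> borel_measurable nu"
      by (rule dist_powr_meas) auto
    fix t assume t: "t \<in> Y" and nz: "ennreal (dist x t powr (-\<sigma>)) * indicator (ball x (r0/2) - ball x \<rho>) t \<noteq> 0"
    have tb: "dist x t < r0/2" "\<rho> \<le> dist x t" using nz by (auto simp: indicator_def split: if_splits)
    obtain n where n: "dist x t / \<rho> < (2::real) ^ n"
      using real_arch_pow[of 2 "dist x t / \<rho>"] by auto
    have Pn: "dist x t < \<rho> * 2 ^ n" using n \<rho> by (simp add: field_simps)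
    obtain k where k: "\<forall>i\<le>k. \<not> dist x t < \<rho> * 2 ^ i" "dist x t < \<rho> * 2 ^ Suc k"
      using ex_least_nat_less[of "\<lambda>i. dist x t < \<rho> * 2 ^ i", OF Pn] tb by auto
    have k2: "\<rho> * 2 ^ k \<le> dist x t" using k(1) by auto
    have kr: "\<rho> * 2 ^ Suc k < r0" using k2 tb by simp
    have "t \<in> ball x (\<rho> * 2 ^ Suc k)" using k(2) by auto
    moreover have "dist x t powr (-\<sigma>) \<le> a k"
      unfolding a_def using k2 \<rho> \<sigma> kr by (auto intro: powr_mono2')
    ultimately show "\<exists>k. t \<in> ball x (\<rho> * 2 ^ Suc k) \<and> ennreal (dist x t powr (-\<sigma>)) * indicator (ball x (r0/2) - ball x \<rho>) t \<le> ennreal (a k)"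
      by (intro exI[of _ k]) (auto simp: indicator_def intro: ennreal_leI)
  qed
  also have "\<dots> \<le> (\<Sum>k. ennreal (if \<rho> * 2 ^ Suc k < r0 then c0 * 2 powr ups * (\<rho> * 2 ^ k) powr (ups - \<sigma>) else 0))"
  proof (rule suminf_le)
    fix k
    show "ennreal (a k) * emeasure nu (ball x (\<rho> * 2 ^ Suc k) \<inter> Y) \<le> ennreal (if \<rho> * 2 ^ Suc k < r0 then c0 * 2 powr ups * (\<rho> * 2 ^ k) powr (ups - \<sigma>) else 0)"
    proof (cases "\<rho> * 2 ^ Suc k < r0")
      case True
      have r: "0 < \<rho> * 2 ^ Suc k" using \<rho> by simp
      have "ennreal (a k) * emeasure nu (ball x (\<rho> * 2 ^ Suc k) \<inter> Y) \<le> ennreal (a k) * ennreal (c0 * (\<rho> * 2 ^ Suc k) powr ups)"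
        using ahl[OF x r True] by (intro mult_left_mono) auto
      also have "\<dots> = ennreal (a k * (c0 * (\<rho> * 2 ^ Suc k) powr ups))"
        using c0 by (subst ennreal_mult) (auto simp: a_def)
      also have "a k * (c0 * (\<rho> * 2 ^ Suc k) powr ups) = c0 * 2 powr ups * (\<rho> * 2 ^ k) powr (ups - \<sigma>)"
      proof -
        have "(\<rho> * 2 ^ Suc k) powr ups = 2 powr ups * (\<rho> * 2 ^ k) powr ups"
          using \<rho> by (simp add: powr_mult[symmetric] mult_ac)
        moreover have "(\<rho> * 2 ^ k) powr (-\<sigma>) * (\<rho> * 2 ^ k) powr ups = (\<rho> * 2 ^ k) powr (ups - \<sigma>)"
          by (simp add: powr_add[symmetric])
        ultimately show ?thesis using True unfolding a_def
          by (simp add: mult_ac)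
      qed
      finally show ?thesis using True by simp
    next
      case False thus ?thesis by (simp add: a_def)
    qed
  qed auto
  finally show ?thesis .
qed

lemma far_pointwise:
  assumes "ups \<le> \<sigma>" "0 < \<rho>" "\<rho> \<le> d" "r0/2 \<le> d"
  shows "d powr (-\<sigma>) \<le> (r0/2) powr (-ups) * \<rho> powr (ups - \<sigma>)"
proof -
  have d: "d > 0" using assms by auto
  have "d powr (-\<sigma>) = d powr (-ups) * d powr (ups - \<sigma>)" by (simp add: powr_add[symmetric])
  also have "\<dots> \<le> (r0/2) powr (-ups) * \<rho> powr (ups - \<sigma>)"
    using assms r0 ups_pos by (intro mult_mono powr_mono2') auto
  finally show ?thesis .
qed

lemma outer_split:
  assumes x: "x \<in> Y" and \<rho>: "0 < \<rho>" and \<sigma>: "ups \<le> \<sigma>"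
  shows "(\<integral>\<^sup>+t. ennreal (dist x t powr (-\<sigma>)) * indicator (- ball x \<rho>) t \<partial>nu)
     \<le> (\<integral>\<^sup>+t. ennreal (dist x t powr (-\<sigma>)) * indicator (ball x (r0/2) - ball x \<rho>) t \<partial>nu)
        + ennreal ((r0/2) powr (-ups) * \<rho> powr (ups - \<sigma>) * measure nu Y)"
proof -
  have "(\<integral>\<^sup>+t. ennreal (dist x t powr (-\<sigma>)) * indicator (- ball x \<rho>) t \<partial>nu)
     \<le> (\<integral>\<^sup>+t. ennreal (dist x t powr (-\<sigma>)) * indicator (ball x (r0/2) - ball x \<rho>) t + ennreal ((r0/2) powr (-ups) * \<rho> powr (ups - \<sigma>)) \<partial>nu)"
  proof (rule nn_integral_mono)
    fix t assume t: "t \<in> space nu"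
    show "ennreal (dist x t powr (-\<sigma>)) * indicator (- ball x \<rho>) t \<le> ennreal (dist x t powr (-\<sigma>)) * indicator (ball x (r0/2) - ball x \<rho>) t + ennreal ((r0/2) powr (-ups) * \<rho> powr (ups - \<sigma>))"
    proof (cases "t \<in> ball x \<rho>")
      case True thus ?thesis by simp
    next
      case False
      show ?thesis
      proof (cases "t \<in> ball x (r0/2)")
        case True thus ?thesis using False by simp
      next
        case F2: False
        have "dist x t powr (-\<sigma>) \<le> (r0/2) powr (-ups) * \<rho> powr (ups - \<sigma>)"
          using False F2 \<sigma> \<rho> by (intro far_pointwise) auto
        thus ?thesis using False F2 by (simp add: ennreal_leI)
      qed
    qed
  qed
  also have "\<dots> = (\<integral>\<^sup>+t. ennreal (dist x t powr (-\<sigma>)) * indicator (ball x (r0/2) - ball x \<rho>) t \<partial>nu) + (\<integral>\<^sup>+t. ennreal ((r0/2) powr (-ups) * \<rho> powr (ups - \<sigma>)) \<partial>nu)"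
    by (intro nn_integral_add dist_powr_meas) auto
  also have "(\<integral>\<^sup>+t. ennreal ((r0/2) powr (-ups) * \<rho> powr (ups - \<sigma>)) \<partial>nu) = ennreal ((r0/2) powr (-ups) * \<rho> powr (ups - \<sigma>) * measure nu Y)"
    by (subst nn_const_Y) auto
  finally show ?thesis .
qed

lemma outer_gt:
  assumes \<sigma>: "ups < \<sigma>"
  shows "\<exists>C\<ge>0. \<forall>x\<in>Y. \<forall>\<rho>>0.
     (\<integral>\<^sup>+t. ennreal (dist x t powr (-\<sigma>)) * indicator (- ball x \<rho>) t \<partial>nu) \<le> ennreal (C * \<rho> powr (ups - \<sigma>))"
proof -
  define q :: real where "q = 2 powr (ups - \<sigma>)"
  have "2 powr (ups - \<sigma>) < (2::real) powr 0" using \<sigma> by (subst powr_less_cancel_iff) auto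
  hence q: "0 < q" "q < 1" by (auto simp: q_def)
  define V where "V = measure nu Y"
  have V: "V \<ge> 0" by (simp add: V_def V_nonneg)
  define C where "C = c0 * 2 powr ups / (1 - q) + (r0/2) powr (-ups) * V"
  show ?thesis
  proof (intro exI[of _ C] conjI ballI allI impI)
    show "C \<ge> 0" using q c0 V by (simp add: C_def)
    fix x \<rho> assume x: "x \<in> Y" and \<rho>: "(0::real) < \<rho>"
    have "(\<integral>\<^sup>+t. ennreal (dist x t powr (-\<sigma>)) * indicator (ball x (r0/2) - ball x \<rho>) t \<partial>nu)
       \<le> (\<Sum>k. ennreal (if \<rho> * 2 ^ Suc k < r0 then c0 * 2 powr ups * (\<rho> * 2 ^ k) powr (ups - \<sigma>) else 0))"
      using middle_sum[OF x \<rho>, of \<sigma>] \<sigma> ups_pos by auto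
    also have "\<dots> \<le> (\<Sum>k. ennreal (c0 * 2 powr ups * \<rho> powr (ups - \<sigma>) * q ^ k))"
    proof (rule suminf_le)
      fix k
      have "(\<rho> * 2 ^ k) powr (ups - \<sigma>) = \<rho> powr (ups - \<sigma>) * q ^ k"
        using \<rho> by (simp add: powr_mult pow_powr q_def)
      thus "ennreal (if \<rho> * 2 ^ Suc k < r0 then c0 * 2 powr ups * (\<rho> * 2 ^ k) powr (ups - \<sigma>) else 0) \<le> ennreal (c0 * 2 powr ups * \<rho> powr (ups - \<sigma>) * q ^ k)"
        using c0 q by (auto intro!: ennreal_leI simp: mult_ac)
    qed auto
    also have "\<dots> = ennreal (\<Sum>k. c0 * 2 powr ups * \<rho> powr (ups - \<sigma>) * q ^ k)"
      using q c0 by (intro suminf_ennreal2 summable_mult summable_geometric) auto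
    also have "(\<Sum>k. c0 * 2 powr ups * \<rho> powr (ups - \<sigma>) * q ^ k) = c0 * 2 powr ups / (1 - q) * \<rho> powr (ups - \<sigma>)"
      using q by (simp add: suminf_mult suminf_geometric summable_geometric)
    finally have mid: "(\<integral>\<^sup>+t. ennreal (dist x t powr (-\<sigma>)) * indicator (ball x (r0/2) - ball x \<rho>) t \<partial>nu)
       \<le> ennreal (c0 * 2 powr ups / (1 - q) * \<rho> powr (ups - \<sigma>))" .
    have "(\<integral>\<^sup>+t. ennreal (dist x t powr (-\<sigma>)) * indicator (- ball x \<rho>) t \<partial>nu)
       \<le> ennreal (c0 * 2 powr ups / (1 - q) * \<rho> powr (ups - \<sigma>)) + ennreal ((r0/2) powr (-ups) * \<rho> powr (ups - \<sigma>) * V)"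
      using outer_split[OF x \<rho>, of \<sigma>] \<sigma> mid unfolding V_def by (meson add_right_mono less_imp_le order_trans)
    also have "\<dots> = ennreal (C * \<rho> powr (ups - \<sigma>))"
      using q c0 V by (simp add: C_def ennreal_plus[symmetric] algebra_simps del: ennreal_plus)
    finally show "(\<integral>\<^sup>+t. ennreal (dist x t powr (-\<sigma>)) * indicator (- ball x \<rho>) t \<partial>nu) \<le> ennreal (C * \<rho> powr (ups - \<sigma>))" .
  qed
qed

lemma outer_eq:
  shows "\<exists>C\<ge>0. \<forall>x\<in>Y. \<forall>\<rho>>0.
     (\<integral>\<^sup>+t. ennreal (dist x t powr (-ups)) * indicator (- ball x \<rho>) t \<partial>nu) \<le> ennreal (C * (1 + \<bar>ln \<rho>\<bar>))"
proof -
  define V where "V = measure nu Y"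
  have V: "V \<ge> 0" by (simp add: V_def V_nonneg)
  define A where "A = c0 * 2 powr ups"
  have A: "A > 0" using c0 by (simp add: A_def)
  define L where "L = \<bar>ln r0\<bar> / ln 2"
  have L: "L \<ge> 0" by (simp add: L_def)
  define C where "C = A * (1 + L + 1 / ln 2) + (r0/2) powr (-ups) * V"
  show ?thesis
  proof (intro exI[of _ C] conjI ballI allI impI)
    show "C \<ge> 0" using A L V by (simp add: C_def)
    fix x \<rho> assume x: "x \<in> Y" and \<rho>: "(0::real) < \<rho>"
    define N where "N = nat \<lceil>log 2 (r0 / \<rho>)\<rceil>"
    have "(\<integral>\<^sup>+t. ennreal (dist x t powr (-ups)) * indicator (ball x (r0/2) - ball x \<rho>) t \<partial>nu)
       \<le> (\<Sum>k. ennreal (if \<rho> * 2 ^ Suc k < r0 then c0 * 2 powr ups * (\<rho> * 2 ^ k) powr (ups - ups) else 0))"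
      using middle_sum[OF x \<rho>, of ups] ups_pos by auto
    also have "\<dots> \<le> (\<Sum>k. ennreal (if k < N then A else 0))"
    proof (rule suminf_le)
      fix k
      show "ennreal (if \<rho> * 2 ^ Suc k < r0 then c0 * 2 powr ups * (\<rho> * 2 ^ k) powr (ups - ups) else 0) \<le> ennreal (if k < N then A else 0)"
      proof (cases "\<rho> * 2 ^ Suc k < r0")
        case True
        have "\<rho> * 2 ^ k \<le> \<rho> * 2 ^ Suc k" using \<rho> by simp
        hence "\<rho> * 2 ^ k < r0" using True by linarith
        hence "(2::real) ^ k < r0 / \<rho>" using \<rho> by (simp add: field_simps)
        hence "log 2 (2 ^ k) < log 2 (r0 / \<rho>)" using \<rho> r0 by (subst log_less_cancel_iff) auto
        hence "real k < log 2 (r0 / \<rho>)" by (simp add: log_nat_power)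
        hence "k < N" unfolding N_def by linarith
        thus ?thesis using True \<rho> by (simp add: A_def)
      next
        case False thus ?thesis by simp
      qed
    qed auto
    also have "(\<Sum>k. ennreal (if k < N then A else 0)) = (\<Sum>k<N. ennreal (if k < N then A else 0))"
      by (intro suminf_finite) auto
    also have "\<dots> = ennreal (real N * A)" using A by (simp add: ennreal_of_nat_eq_real_of_nat ennreal_mult)
    finally have mid: "(\<integral>\<^sup>+t. ennreal (dist x t powr (-ups)) * indicator (ball x (r0/2) - ball x \<rho>) t \<partial>nu)
       \<le> ennreal (real N * A)" .
    have "(\<integral>\<^sup>+t. ennreal (dist x t powr (-ups)) * indicator (- ball x \<rho>) t \<partial>nu)
       \<le> ennreal (real N * A) + ennreal ((r0/2) powr (-ups) * \<rho> powr (ups - ups) * V)"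
      using outer_split[OF x \<rho>, of ups] mid unfolding V_def by (meson add_right_mono order_refl order_trans)
    also have "\<dots> \<le> ennreal (C * (1 + \<bar>ln \<rho>\<bar>))"
    proof -
      have N: "real N \<le> 1 + L + \<bar>ln \<rho>\<bar> / ln 2"
      proof -
        have "real N \<le> max 0 (log 2 (r0 / \<rho>) + 1)" unfolding N_def by linarith
        moreover have "log 2 (r0 / \<rho>) = (ln r0 - ln \<rho>) / ln 2"
          using \<rho> r0 by (simp add: log_def ln_div)
        moreover have "(ln r0 - ln \<rho>) / ln 2 \<le> L + \<bar>ln \<rho>\<bar> / ln 2"
          unfolding L_def by (simp add: divide_simps)
        moreover have "0 \<le> \<bar>ln \<rho>\<bar> / ln 2" by simp
        ultimately show ?thesis using L by (smt (verit))
      qed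
      have i: "\<bar>ln \<rho>\<bar> / ln 2 \<le> (1 / ln 2) * (1 + \<bar>ln \<rho>\<bar>)" by (simp add: divide_simps)
      have "real N * A \<le> (1 + L + \<bar>ln \<rho>\<bar> / ln 2) * A" using N A by (intro mult_right_mono) auto
      also have "\<dots> \<le> A * (1 + L + 1 / ln 2) * (1 + \<bar>ln \<rho>\<bar>)"
      proof -
        have "(1 + L) \<le> (1 + L) * (1 + \<bar>ln \<rho>\<bar>)" using L by (simp add: algebra_simps)
        hence "1 + L + \<bar>ln \<rho>\<bar> / ln 2 \<le> (1 + L + 1 / ln 2) * (1 + \<bar>ln \<rho>\<bar>)"
          using i by (simp add: algebra_simps)
        hence "(1 + L + \<bar>ln \<rho>\<bar> / ln 2) * A \<le> ((1 + L + 1 / ln 2) * (1 + \<bar>ln \<rho>\<bar>)) * A"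
          using A by (intro mult_right_mono) auto
        thus ?thesis by (simp add: mult_ac)
      qed
      finally have a1: "real N * A \<le> A * (1 + L + 1 / ln 2) * (1 + \<bar>ln \<rho>\<bar>)" .
      have a2: "(r0/2) powr (-ups) * \<rho> powr (ups - ups) * V \<le> (r0/2) powr (-ups) * V * (1 + \<bar>ln \<rho>\<bar>)"
      proof -
        have "0 \<le> (r0 / 2) powr - ups * V" using V by simp
        hence "(r0 / 2) powr - ups * V * 1 \<le> (r0 / 2) powr - ups * V * (1 + \<bar>ln \<rho>\<bar>)"
          by (intro mult_left_mono) auto
        thus ?thesis using \<rho> by simp
      qed
      have "ennreal (real N * A) + ennreal ((r0/2) powr (-ups) * \<rho> powr (ups - ups) * V)
          = ennreal (real N * A + (r0/2) powr (-ups) * \<rho> powr (ups - ups) * V)"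
        using A V by (intro ennreal_plus[symmetric]) auto
      also have "\<dots> \<le> ennreal (C * (1 + \<bar>ln \<rho>\<bar>))"
        using a1 a2 by (intro ennreal_leI) (simp add: C_def algebra_simps)
      finally show ?thesis .
    qed
    finally show "(\<integral>\<^sup>+t. ennreal (dist x t powr (-ups)) * indicator (- ball x \<rho>) t \<partial>nu) \<le> ennreal (C * (1 + \<bar>ln \<rho>\<bar>))" .
  qed
qed

end


lemma pw_min:
  fixes a b s1 s2 :: real
  assumes "0 < a" "a \<le> b" "0 \<le> s2"
  shows "a powr (-s1) * b powr (-s2) \<le> a powr (-(s1+s2))"
proof -
  have "b powr (-s2) \<le> a powr (-s2)" using assms by (intro powr_mono2') auto
  hence "a powr (-s1) * b powr (-s2) \<le> a powr (-s1) * a powr (-s2)" by (intro mult_left_mono) auto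
  also have "\<dots> = a powr (-(s1+s2))" by (simp add: powr_add[symmetric])
  finally show ?thesis .
qed

lemma pw1:
  fixes a b s1 s2 :: real
  assumes "0 < a" "0 < b" "0 \<le> s1" "0 \<le> s2"
  shows "a powr (-s1) * b powr (-s2) \<le> a powr (-(s1+s2)) + b powr (-(s1+s2))"
proof (cases "a \<le> b")
  case True
  thus ?thesis using pw_min[of a b s2 s1] assms by (smt (verit) powr_ge_zero)
next
  case False
  have "b powr (-s2) * a powr (-s1) \<le> b powr (-(s2+s1))" using False assms by (intro pw_min) auto
  thus ?thesis by (smt (verit) powr_ge_zero mult.commute add.commute)
qed

lemma pw2:
  fixes a b s1 s2 d :: real
  assumes "0 < a" "0 < b" "0 \<le> s1" "0 \<le> s2" "0 < d" "d \<le> a + b"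
  shows "a powr (-s1) * b powr (-s2) \<le> (d/2) powr (-s2) * a powr (-s1) + (d/2) powr (-s1) * b powr (-s2)"
proof (cases "a < d/2")
  case True
  hence "b powr (-s2) \<le> (d/2) powr (-s2)" using assms by (intro powr_mono2') auto
  hence "a powr (-s1) * b powr (-s2) \<le> a powr (-s1) * (d/2) powr (-s2)" by (intro mult_left_mono) auto
  thus ?thesis by (smt (verit) powr_ge_zero mult_nonneg_nonneg mult.commute)
next
  case False
  hence "a powr (-s1) \<le> (d/2) powr (-s1)" using assms by (intro powr_mono2') auto
  hence "a powr (-s1) * b powr (-s2) \<le> (d/2) powr (-s1) * b powr (-s2)" by (intro mult_right_mono) auto
  thus ?thesis by (smt (verit) powr_ge_zero mult_nonneg_nonneg mult.commute)
qed

lemma pw3: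
  fixes a b s1 s2 d :: real
  assumes "0 < a" "0 < b" "0 \<le> s1" "0 \<le> s2" "0 < d" "d \<le> a + b" "a \<le> b + d"
  shows "a powr (-s1) * b powr (-s2) \<le> (if a < d/2 then (d/2) powr (-s2) * a powr (-s1) else 0)
     + (if b < d/2 then (d/2) powr (-s1) * b powr (-s2) else 0)
     + (if d/2 \<le> a then 3 powr s2 * a powr (-(s1+s2)) else 0)"
proof (cases "a < d/2")
  case True
  hence "b powr (-s2) \<le> (d/2) powr (-s2)" using assms by (intro powr_mono2') auto
  hence "a powr (-s1) * b powr (-s2) \<le> a powr (-s1) * (d/2) powr (-s2)" by (intro mult_left_mono) auto
  moreover have "0 \<le> (if b < d/2 then (d/2) powr (-s1) * b powr (-s2) else 0)" by simp
  moreover have "(if d/2 \<le> a then 3 powr s2 * a powr (-(s1+s2)) else 0) = 0" using True by simp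
  ultimately show ?thesis using True by (simp add: mult.commute)
next
  case F1: False
  show ?thesis
  proof (cases "b < d/2")
    case True
    hence "a powr (-s1) \<le> (d/2) powr (-s1)" using assms F1 by (intro powr_mono2') auto
    hence "a powr (-s1) * b powr (-s2) \<le> (d/2) powr (-s1) * b powr (-s2)" by (intro mult_right_mono) auto
    moreover have "0 \<le> 3 powr s2 * a powr (-(s1+s2))" by simp
    ultimately show ?thesis using True F1 by (simp add: add_increasing2)
  next
    case False
    have "a/3 \<le> b" using assms False by simp
    hence "b powr (-s2) \<le> (a/3) powr (-s2)" using assms by (intro powr_mono2') auto
    also have "(a/3) powr (-s2) = 3 powr s2 * a powr (-s2)"
      using assms by (simp add: powr_divide powr_minus divide_simps)
    finally have "a powr (-s1) * b powr (-s2) \<le> a powr (-s1) * (3 powr s2 * a powr (-s2))"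
      by (intro mult_left_mono) auto
    also have "\<dots> = 3 powr s2 * a powr (-(s1+s2))" by (simp add: powr_add[symmetric] mult_ac)
    finally show ?thesis using False F1 by simp
  qed
qed

lemma pw4:
  fixes a b s1 s2 r :: real
  assumes "0 < a" "0 < b" "0 \<le> s1" "0 \<le> s2" "a < r \<or> b < r"
  shows "a powr (-s1) * b powr (-s2) \<le> (if a < r then a powr (-(s1+s2)) else 0) + (if b < r then b powr (-(s1+s2)) else 0)"
proof (cases "a \<le> b")
  case True
  hence "a < r" using assms by auto
  moreover have "a powr (-s1) * b powr (-s2) \<le> a powr (-(s1+s2))" using True assms by (intro pw_min) auto
  ultimately show ?thesis by (simp add: add_increasing2)
next
  case False
  hence "b < r" using assms by auto
  moreover have "b powr (-s2) * a powr (-s1) \<le> b powr (-(s2+s1))" using False assms by (intro pw_min) auto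
  ultimately show ?thesis by (simp add: mult.commute add.commute add_increasing)
qed

lemma pw5:
  fixes a b s1 s2 r D :: real
  assumes "0 < a" "0 < b" "0 \<le> s1" "0 \<le> s2" "0 < D" "(a < r \<and> D \<le> b) \<or> (b < r \<and> D \<le> a)"
  shows "a powr (-s1) * b powr (-s2) \<le> (if a < r then D powr (-s2) * a powr (-s1) else 0) + (if b < r then D powr (-s1) * b powr (-s2) else 0)"
proof (cases "a < r \<and> D \<le> b")
  case True
  hence "b powr (-s2) \<le> D powr (-s2)" using assms by (intro powr_mono2') auto
  hence "a powr (-s1) * b powr (-s2) \<le> a powr (-s1) * D powr (-s2)" by (intro mult_left_mono) auto
  hence "a powr (-s1) * b powr (-s2) \<le> D powr (-s2) * a powr (-s1)" by (simp add: mult.commute)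
  moreover have "0 \<le> (if b < r then D powr (-s1) * b powr (-s2) else 0)" by simp
  ultimately show ?thesis using True by (simp add: add_increasing2)
next
  case False
  hence F: "b < r" "D \<le> a" using assms by auto
  hence "a powr (-s1) \<le> D powr (-s1)" using assms by (intro powr_mono2') auto
  hence "a powr (-s1) * b powr (-s2) \<le> D powr (-s1) * b powr (-s2)" by (intro mult_right_mono) auto
  moreover have "0 \<le> (if a < r then D powr (-s2) * a powr (-s1) else 0)" by simp
  ultimately show ?thesis using F by (simp add: add_increasing)
qed


lemma kernel_bound:
  assumes "K \<in> kernel_class s Y"
  shows "\<exists>A\<ge>0. \<forall>x\<in>Y. \<forall>y\<in>Y. x \<noteq> y \<longrightarrow> cmod (K x y) \<le> A * dist x y powr (-s)"
proof -
  obtain C where C: "\<And>x y. x\<in>Y \<Longrightarrow> y\<in>Y \<Longrightarrow> x \<noteq> y \<Longrightarrow> cmod (K x y) * dist x y powr s \<le> C"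
    using assms unfolding kernel_class_def by blast
  show ?thesis
  proof (intro exI[of _ "max C 0"] conjI ballI impI)
    fix x y assume xy: "x \<in> Y" "y \<in> Y" "x \<noteq> y"
    have d: "dist x y powr s > 0" using xy by simp
    have "cmod (K x y) \<le> C / dist x y powr s" using C[OF xy] d by (simp add: field_simps)
    also have "\<dots> \<le> max C 0 / dist x y powr s" using d by (intro divide_right_mono) auto
    also have "\<dots> = max C 0 * dist x y powr (-s)" by (simp add: powr_minus divide_inverse)
    finally show "cmod (K x y) \<le> max C 0 * dist x y powr (-s)" .
  qed auto
qed

lemma kernel_cont1:
  assumes "K \<in> kernel_class s Y" "x \<in> Y"
  shows "continuous_on (Y - {x}) (\<lambda>t. K x t)"
proof -
  have c: "continuous_on (offdiag Y) (\<lambda>p. K (fst p) (snd p))" using assms unfolding kernel_class_def by blast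
  have "continuous_on (Y - {x}) (\<lambda>t. (\<lambda>p. K (fst p) (snd p)) (x, t))"
    by (rule continuous_on_compose2[OF c]) (use assms in \<open>auto simp: offdiag_def intro!: continuous_intros\<close>)
  thus ?thesis by simp
qed

lemma kernel_cont2:
  assumes "K \<in> kernel_class s Y" "y \<in> Y"
  shows "continuous_on (Y - {y}) (\<lambda>t. K t y)"
proof -
  have c: "continuous_on (offdiag Y) (\<lambda>p. K (fst p) (snd p))" using assms unfolding kernel_class_def by blast
  have "continuous_on (Y - {y}) (\<lambda>t. (\<lambda>p. K (fst p) (snd p)) (t, y))"
    by (rule continuous_on_compose2[OF c]) (use assms in \<open>auto simp: offdiag_def intro!: continuous_intros\<close>)
  thus ?thesis by simp
qed

lemma enn_ind: "ennreal u * indicator A t = ennreal (if t \<in> A then u else 0)"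
  by (simp add: indicator_def)

lemma enn_comb2:
  assumes "0 \<le> c1" "0 \<le> c2" "0 \<le> u" "0 \<le> v" "z \<le> c1 * u + c2 * v"
  shows "ennreal z \<le> ennreal c1 * ennreal u + ennreal c2 * ennreal v"
proof -
  have "ennreal z \<le> ennreal (c1 * u + c2 * v)" using assms by (intro ennreal_leI)
  thus ?thesis using assms by (simp add: ennreal_plus[symmetric] ennreal_mult[symmetric] del: ennreal_plus)
qed

lemma enn_comb3:
  assumes "0 \<le> c1" "0 \<le> c2" "0 \<le> c3" "0 \<le> u" "0 \<le> v" "0 \<le> w" "z \<le> c1 * u + c2 * v + c3 * w"
  shows "ennreal z \<le> ennreal c1 * ennreal u + ennreal c2 * ennreal v + ennreal c3 * ennreal w"
proof -
  have "ennreal z \<le> ennreal (c1 * u + c2 * v + c3 * w)" using assms by (intro ennreal_leI)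
  thus ?thesis using assms by (simp add: ennreal_plus[symmetric] ennreal_mult[symmetric] del: ennreal_plus)
qed


lemma enn_sum2_bound:
  assumes "X \<le> ennreal g1" "X' \<le> ennreal g2" "0 \<le> c1" "0 \<le> c2" "0 \<le> g1" "0 \<le> g2"
  shows "ennreal c1 * X + ennreal c2 * X' \<le> ennreal (c1 * g1 + c2 * g2)"
proof -
  have "ennreal c1 * X + ennreal c2 * X' \<le> ennreal c1 * ennreal g1 + ennreal c2 * ennreal g2"
    using assms by (intro add_mono mult_left_mono) auto
  also have "\<dots> = ennreal (c1 * g1 + c2 * g2)" using assms
    by (simp add: ennreal_plus[symmetric] ennreal_mult[symmetric] del: ennreal_plus)
  finally show ?thesis .
qed

lemma enn_sum3_bound:
  assumes "X \<le> ennreal g1" "X' \<le> ennreal g2" "X'' \<le> ennreal g3" "0 \<le> c1" "0 \<le> c2" "0 \<le> c3" "0 \<le> g1" "0 \<le> g2" "0 \<le> g3"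
  shows "ennreal c1 * X + ennreal c2 * X' + ennreal c3 * X'' \<le> ennreal (c1 * g1 + c2 * g2 + c3 * g3)"
proof -
  have "ennreal c1 * X + ennreal c2 * X' + ennreal c3 * X'' \<le> ennreal c1 * ennreal g1 + ennreal c2 * ennreal g2 + ennreal c3 * ennreal g3"
    using assms by (intro add_mono mult_left_mono) auto
  also have "\<dots> = ennreal (c1 * g1 + c2 * g2 + c3 * g3)" using assms
    by (simp add: ennreal_plus[symmetric] ennreal_mult[symmetric] del: ennreal_plus)
  finally show ?thesis .
qed

context ahl_setting
begin

lemma meas_punct:
  fixes f :: "'a \<Rightarrow> complex"
  assumes c: "continuous_on (Y - {x}) f"
  shows "f \<in> borel_measurable nu"
proof (rule meas_transfer, rule borel_measurableI)
  fix S :: "complex set" assume S: "open S"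
  obtain T where T: "open T" "f -` S \<inter> (Y - {x}) = T \<inter> (Y - {x})"
    using continuous_on_open_invariant c S by metis
  define B where "B = (T - {x}) \<union> (if f x \<in> S then {x} else {})"
  have B: "B \<in> sets borel" using T by (auto simp: B_def)
  have "f -` S \<inter> space (restrict_space borel Y) = Y \<inter> B"
    using T(2) by (auto simp: B_def space_restrict_space split: if_splits)
  also have "\<dots> \<in> sets (restrict_space borel Y)" using B by (auto simp: sets_restrict_space)
  finally show "f -` S \<inter> space (restrict_space borel Y) \<in> sets (restrict_space borel Y)" .
qed

lemma dist_powr_meas0: "(\<lambda>t. ennreal (dist x t powr b)) \<in> borel_measurable nu"
  using dist_powr_meas[of UNIV x b] by simp

lemma nn_mono_AE2:
  assumes "x \<in> Y" "y \<in> Y" "\<And>t. t \<in> Y \<Longrightarrow> t \<noteq> x \<Longrightarrow> t \<noteq> y \<Longrightarrow> h t \<le> g t"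
  shows "(\<integral>\<^sup>+t. h t \<partial>nu) \<le> (\<integral>\<^sup>+t. g t \<partial>nu)"
proof (rule nn_integral_mono_AE)
  show "AE t in nu. h t \<le> g t"
    using AE_neq[OF assms(1)] AE_neq[OF assms(2)] AE_space
  proof eventually_elim
    case (elim t) thus ?case using assms(3) space_nu by auto
  qed
qed

lemma term_meas: "A \<in> sets borel \<Longrightarrow> (\<lambda>t. ennreal c * (ennreal (dist x t powr b) * indicator A t)) \<in> borel_measurable nu"
  by (intro borel_measurable_times_ennreal borel_measurable_const dist_powr_meas)

lemma int_comb2:
  assumes "A1 \<in> sets borel" "A2 \<in> sets borel"
  shows "(\<integral>\<^sup>+t. ennreal c1 * (ennreal (dist x1 t powr b1) * indicator A1 t) + ennreal c2 * (ennreal (dist x2 t powr b2) * indicator A2 t) \<partial>nu)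
    = ennreal c1 * (\<integral>\<^sup>+t. ennreal (dist x1 t powr b1) * indicator A1 t \<partial>nu) + ennreal c2 * (\<integral>\<^sup>+t. ennreal (dist x2 t powr b2) * indicator A2 t \<partial>nu)"
  using assms by (simp add: nn_integral_add term_meas borel_measurable_add nn_integral_cmult dist_powr_meas)

lemma int_comb3:
  assumes "A1 \<in> sets borel" "A2 \<in> sets borel" "A3 \<in> sets borel"
  shows "(\<integral>\<^sup>+t. ennreal c1 * (ennreal (dist x1 t powr b1) * indicator A1 t) + ennreal c2 * (ennreal (dist x2 t powr b2) * indicator A2 t) + ennreal c3 * (ennreal (dist x3 t powr b3) * indicator A3 t) \<partial>nu)
    = ennreal c1 * (\<integral>\<^sup>+t. ennreal (dist x1 t powr b1) * indicator A1 t \<partial>nu) + ennreal c2 * (\<integral>\<^sup>+t. ennreal (dist x2 t powr b2) * indicator A2 t \<partial>nu) + ennreal c3 * (\<integral>\<^sup>+t. ennreal (dist x3 t powr b3) * indicator A3 t \<partial>nu)"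
  using assms by (simp add: nn_integral_add term_meas borel_measurable_add nn_integral_cmult dist_powr_meas)

lemma lint_bound:
  fixes f :: "'a \<Rightarrow> complex"
  assumes "integrable nu f" "(\<integral>\<^sup>+t. ennreal (cmod (f t)) \<partial>nu) \<le> ennreal B" "0 \<le> B"
  shows "cmod (LINT t|nu. f t) \<le> B"
proof -
  have "ennreal (cmod (LINT t|nu. f t)) \<le> ennreal B"
    using integral_norm_bound_ennreal[OF assms(1)] assms(2) by (simp add: order_trans)
  thus ?thesis using assms(3) by (simp add: ennreal_le_iff)
qed

end

locale two_kernels = ahl_setting +
  fixes K1 K2 :: "'a::metric_space \<Rightarrow> 'a \<Rightarrow> complex" and s1 s2 A1 A2 :: real
  assumes s1: "0 \<le> s1" "s1 < ups" and s2: "0 \<le> s2" "s2 < ups"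
    and K1: "K1 \<in> kernel_class s1 Y" and K2: "K2 \<in> kernel_class s2 Y"
    and A1: "0 \<le> A1" "\<And>x y. x\<in>Y \<Longrightarrow> y\<in>Y \<Longrightarrow> x \<noteq> y \<Longrightarrow> cmod (K1 x y) \<le> A1 * dist x y powr (-s1)"
    and A2: "0 \<le> A2" "\<And>x y. x\<in>Y \<Longrightarrow> y\<in>Y \<Longrightarrow> x \<noteq> y \<Longrightarrow> cmod (K2 x y) \<le> A2 * dist x y powr (-s2)"
begin

lemma F_meas: "x \<in> Y \<Longrightarrow> y \<in> Y \<Longrightarrow> (\<lambda>t. K1 x t * K2 t y) \<in> borel_measurable nu"
  using kernel_cont1[OF K1, of x] kernel_cont2[OF K2, of y]
  by (intro borel_measurable_times meas_punct) auto

lemma pw_F: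
  assumes "x \<in> Y" "y \<in> Y" "t \<in> Y" "t \<noteq> x" "t \<noteq> y"
  shows "cmod (K1 x t * K2 t y) \<le> A1 * A2 * (dist x t powr (-s1) * dist y t powr (-s2))"
proof -
  have "cmod (K1 x t * K2 t y) = cmod (K1 x t) * cmod (K2 t y)" by (simp add: norm_mult)
  also have "\<dots> \<le> (A1 * dist x t powr (-s1)) * (A2 * dist t y powr (-s2))"
    using assms A1 A2 by (intro mult_mono) auto
  finally show ?thesis by (simp add: dist_commute mult_ac)
qed

lemma K_cont_seq:
  assumes x0: "x0 \<in> Y" and y0: "y0 \<in> Y" and t: "t \<in> Y" "t \<noteq> x0" "t \<noteq> y0"
    and u: "u \<longlonglongrightarrow> (x0, y0)" and uY: "\<And>n. fst (u n) \<in> Y \<and> snd (u n) \<in> Y"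
    and ne: "\<And>n. fst (u n) \<noteq> t \<and> snd (u n) \<noteq> t"
  shows "(\<lambda>n. K1 (fst (u n)) t * K2 t (snd (u n))) \<longlonglongrightarrow> K1 x0 t * K2 t y0"
proof (rule tendsto_mult)
  have ne2: "\<And>n. t \<noteq> fst (u n)" "\<And>n. t \<noteq> snd (u n)" using ne by metis+
  have c1: "continuous_on (offdiag Y) (\<lambda>p. K1 (fst p) (snd p))" using K1 unfolding kernel_class_def by blast
  have c2: "continuous_on (offdiag Y) (\<lambda>p. K2 (fst p) (snd p))" using K2 unfolding kernel_class_def by blast
  have "(\<lambda>n. (\<lambda>p. K1 (fst p) (snd p)) (fst (u n), t)) \<longlonglongrightarrow> (\<lambda>p. K1 (fst p) (snd p)) (x0, t)"
  proof (rule continuous_on_tendsto_compose[OF c1])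
    show "(\<lambda>n. (fst (u n), t)) \<longlonglongrightarrow> (x0, t)" using u by (intro tendsto_intros) (auto dest: tendsto_fst)
  qed (use x0 t uY ne ne2 in \<open>auto simp: offdiag_def\<close>)
  thus "(\<lambda>n. K1 (fst (u n)) t) \<longlonglongrightarrow> K1 x0 t" by simp
  have "(\<lambda>n. (\<lambda>p. K2 (fst p) (snd p)) (t, snd (u n))) \<longlonglongrightarrow> (\<lambda>p. K2 (fst p) (snd p)) (t, y0)"
  proof (rule continuous_on_tendsto_compose[OF c2])
    show "(\<lambda>n. (t, snd (u n))) \<longlonglongrightarrow> (t, y0)" using u by (intro tendsto_intros) (auto dest: tendsto_snd)
  qed (use y0 t uY ne ne2 in \<open>auto simp: offdiag_def\<close>)
  thus "(\<lambda>n. K2 t (snd (u n))) \<longlonglongrightarrow> K2 t y0" by simp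
qed


lemma case_ii:
  assumes \<sigma>: "s1 + s2 < ups"
  shows "(\<forall>x\<in>Y. \<forall>y\<in>Y. integrable nu (\<lambda>t. K1 x t * K2 t y)) \<and>
        continuous_on (Y \<times> Y) (\<lambda>p. LINT t|nu. K1 (fst p) t * K2 t (snd p)) \<and>
        (\<exists>C. \<forall>x\<in>Y. \<forall>y\<in>Y. cmod (LINT t|nu. K1 x t * K2 t y) / (1 + dist x y powr (ups - (s1 + s2))) \<le> C)"
proof -
  have \<sigma>0: "0 \<le> s1 + s2" using s1 s2 by simp
  have AA: "0 \<le> A1 * A2" using A1 A2 by simp
  obtain G where G: "G \<ge> 0" "\<And>x. x\<in>Y \<Longrightarrow> (\<integral>\<^sup>+t. ennreal (dist x t powr (-(s1+s2))) \<partial>nu) \<le> ennreal G"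
    using global_est[OF \<sigma>0 \<sigma>] by blast
  obtain C\<sigma> where C\<sigma>: "C\<sigma> \<ge> 0" "\<And>x \<rho>. x\<in>Y \<Longrightarrow> \<rho> > 0 \<Longrightarrow>
     (\<integral>\<^sup>+t. ennreal (dist x t powr (-(s1+s2))) * indicator (ball x \<rho>) t \<partial>nu) \<le> ennreal (C\<sigma> * \<rho> powr (ups - (s1+s2)))"
    using inner_est[OF \<sigma>0 \<sigma>] by blast
  have nnb: "(\<integral>\<^sup>+t. ennreal (cmod (K1 x t * K2 t y)) \<partial>nu) \<le> ennreal (A1 * A2 * G + A1 * A2 * G)"
    if x: "x \<in> Y" and y: "y \<in> Y" for x y
  proof -
    have "(\<integral>\<^sup>+t. ennreal (cmod (K1 x t * K2 t y)) \<partial>nu)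
       \<le> (\<integral>\<^sup>+t. ennreal (A1*A2) * (ennreal (dist x t powr (-(s1+s2))) * indicator UNIV t)
              + ennreal (A1*A2) * (ennreal (dist y t powr (-(s1+s2))) * indicator UNIV t) \<partial>nu)"
    proof (rule nn_mono_AE2[OF x y])
      fix t assume t: "t \<in> Y" "t \<noteq> x" "t \<noteq> y"
      have "cmod (K1 x t * K2 t y) \<le> A1 * A2 * (dist x t powr (-s1) * dist y t powr (-s2))"
        using pw_F[OF x y t] .
      also have "\<dots> \<le> A1 * A2 * (dist x t powr (-(s1+s2)) + dist y t powr (-(s1+s2)))"
        using t s1 s2 AA by (intro mult_left_mono pw1) auto
      finally show "ennreal (cmod (K1 x t * K2 t y)) \<le> ennreal (A1*A2) * (ennreal (dist x t powr (-(s1+s2))) * indicator UNIV t)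
              + ennreal (A1*A2) * (ennreal (dist y t powr (-(s1+s2))) * indicator UNIV t)"
        using AA by (simp add: enn_comb2 algebra_simps)
    qed
    also have "\<dots> = ennreal (A1*A2) * (\<integral>\<^sup>+t. ennreal (dist x t powr (-(s1+s2))) * indicator UNIV t \<partial>nu)
              + ennreal (A1*A2) * (\<integral>\<^sup>+t. ennreal (dist y t powr (-(s1+s2))) * indicator UNIV t \<partial>nu)"
      by (rule int_comb2) auto
    also have "\<dots> \<le> ennreal (A1 * A2 * G + A1 * A2 * G)"
      using G x y AA by (intro enn_sum2_bound) auto
    finally show ?thesis .
  qed
  have int: "integrable nu (\<lambda>t. K1 x t * K2 t y)" if "x \<in> Y" "y \<in> Y" for x y
    using nnb[OF that] F_meas[OF that] by (intro integrableI_bounded) (auto simp: top_unique intro: le_less_trans)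
  show ?thesis
  proof (intro conjI ballI)
    show "integrable nu (\<lambda>t. K1 x t * K2 t y)" if "x \<in> Y" "y \<in> Y" for x y using int that by auto
  next
    show "\<exists>C. \<forall>x\<in>Y. \<forall>y\<in>Y. cmod (LINT t|nu. K1 x t * K2 t y) / (1 + dist x y powr (ups - (s1 + s2))) \<le> C"
    proof (intro exI[of _ "A1 * A2 * G + A1 * A2 * G"] ballI)
      fix x y assume xy: "x \<in> Y" "y \<in> Y"
      have b: "cmod (LINT t|nu. K1 x t * K2 t y) \<le> A1 * A2 * G + A1 * A2 * G"
      proof -
        have "0 \<le> A1 * A2 * G" using AA G(1) by (rule mult_nonneg_nonneg)
        hence "0 \<le> A1 * A2 * G + A1 * A2 * G" by simp
        thus ?thesis by (rule lint_bound[OF int[OF xy] nnb[OF xy]])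
      qed
      have "cmod (LINT t|nu. K1 x t * K2 t y) / (1 + dist x y powr (ups - (s1 + s2))) \<le> cmod (LINT t|nu. K1 x t * K2 t y)"
      proof -
        have "0 < 1 + dist x y powr (ups - (s1 + s2))" by (simp add: add_pos_nonneg)
        thus ?thesis
          using divide_left_mono[of 1 "1 + dist x y powr (ups - (s1 + s2))" "cmod (LINT t|nu. K1 x t * K2 t y)"] by simp
      qed
      thus "cmod (LINT t|nu. K1 x t * K2 t y) / (1 + dist x y powr (ups - (s1 + s2))) \<le> A1 * A2 * G + A1 * A2 * G"
        using b by linarith
    qed
  next
    show "continuous_on (Y \<times> Y) (\<lambda>p. LINT t|nu. K1 (fst p) t * K2 t (snd p))"
    proof (rule cont_param_integral[OF finite_nu])
      show "integrable nu (\<lambda>t. K1 (fst p) t * K2 t (snd p))" if "p \<in> Y \<times> Y" for p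
        using int that by (auto simp: mem_Times_iff)
    next
      fix p0 :: "'a \<times> 'a" and e :: real assume p0: "p0 \<in> Y \<times> Y" and e: "e > 0"
      obtain x0 y0 where p0eq: "p0 = (x0, y0)" and x0: "x0 \<in> Y" and y0: "y0 \<in> Y" using p0 by auto
      obtain \<eta>1 where \<eta>1: "\<eta>1 > 0" "\<And>r. 0 < r \<and> r \<le> \<eta>1 \<Longrightarrow> (2 * (A1 * A2) * C\<sigma>) * r powr (ups - (s1+s2)) \<le> e"
        using small_powr_aux[OF e, of "ups - (s1+s2)"] \<sigma> by auto
      define \<eta> where "\<eta> = \<eta>1 / 3"
      have \<eta>: "\<eta> > 0" using \<eta>1 by (simp add: \<eta>_def)
      define S where "S = (ball x0 (2*\<eta>) \<union> ball y0 (2*\<eta>)) \<inter> Y"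
      have S: "S \<in> sets nu" unfolding S_def by (intro set_transfer) auto
      show "\<exists>\<delta>>0. \<exists>S\<in>sets nu. \<exists>B.
        (\<forall>p\<in>Y \<times> Y. dist p p0 < \<delta> \<longrightarrow> (\<integral>\<^sup>+t. indicator S t * ennreal (norm (K1 (fst p) t * K2 t (snd p))) \<partial>nu) \<le> ennreal e) \<and>
        (\<forall>p\<in>Y \<times> Y. dist p p0 < \<delta> \<longrightarrow> (\<forall>t\<in>space nu - S. norm (K1 (fst p) t * K2 t (snd p)) \<le> B)) \<and>
        (\<forall>t\<in>space nu - S. \<forall>u. (\<forall>n. u n \<in> Y \<times> Y \<and> dist (u n) p0 < \<delta>) \<longrightarrow> u \<longlonglongrightarrow> p0 \<longrightarrow> (\<lambda>n. K1 (fst (u n)) t * K2 t (snd (u n))) \<longlonglongrightarrow> K1 (fst p0) t * K2 t (snd p0))"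
      proof (rule exI[of _ \<eta>], rule conjI[OF \<eta>], rule bexI[OF _ S], rule exI[of _ "A1 * A2 * (\<eta> powr (-s1) * \<eta> powr (-s2))"], intro conjI ballI impI allI)
        fix p assume p: "p \<in> Y \<times> Y" and dp: "dist p p0 < \<eta>"
        obtain x y where peq: "p = (x, y)" and x: "x \<in> Y" and y: "y \<in> Y" using p by auto
        have dx: "dist x x0 < \<eta>" using dist_fst_le[of p p0] dp peq p0eq by auto
        have dy: "dist y y0 < \<eta>" using dist_snd_le[of p p0] dp peq p0eq by auto
        have "(\<integral>\<^sup>+t. indicator S t * ennreal (norm (K1 x t * K2 t y)) \<partial>nu)
          \<le> (\<integral>\<^sup>+t. ennreal (A1*A2) * (ennreal (dist x t powr (-(s1+s2))) * indicator (ball x (3*\<eta>)) t)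
              + ennreal (A1*A2) * (ennreal (dist y t powr (-(s1+s2))) * indicator (ball y (3*\<eta>)) t) \<partial>nu)"
        proof (rule nn_mono_AE2[OF x y])
          fix t assume t: "t \<in> Y" "t \<noteq> x" "t \<noteq> y"
          show "indicator S t * ennreal (norm (K1 x t * K2 t y)) \<le> ennreal (A1*A2) * (ennreal (dist x t powr (-(s1+s2))) * indicator (ball x (3*\<eta>)) t)
              + ennreal (A1*A2) * (ennreal (dist y t powr (-(s1+s2))) * indicator (ball y (3*\<eta>)) t)"
          proof (cases "t \<in> S")
            case False thus ?thesis by simp
          next
            case True
            have "dist x t < 3*\<eta> \<or> dist y t < 3*\<eta>"
              using True dx dy dist_triangle[of x t x0] dist_triangle[of y t y0] unfolding S_def
              by (auto simp: dist_commute)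
            hence "cmod (K1 x t * K2 t y) \<le> A1 * A2 * ((if dist x t < 3*\<eta> then dist x t powr (-(s1+s2)) else 0)
                    + (if dist y t < 3*\<eta> then dist y t powr (-(s1+s2)) else 0))"
              using pw_F[OF x y t] t s1 s2 AA pw4[of "dist x t" "dist y t" s1 s2 "3*\<eta>"]
              by (smt (verit) mult_left_mono zero_less_dist_iff dist_commute)
            hence "ennreal (cmod (K1 x t * K2 t y)) \<le> ennreal (A1*A2) * ennreal (if t \<in> ball x (3*\<eta>) then dist x t powr (-(s1+s2)) else 0)
                   + ennreal (A1*A2) * ennreal (if t \<in> ball y (3*\<eta>) then dist y t powr (-(s1+s2)) else 0)"
              using AA by (intro enn_comb2) (auto simp: algebra_simps)
            thus ?thesis using True unfolding enn_ind by simp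
          qed
        qed
        also have "\<dots> = ennreal (A1*A2) * (\<integral>\<^sup>+t. ennreal (dist x t powr (-(s1+s2))) * indicator (ball x (3*\<eta>)) t \<partial>nu)
              + ennreal (A1*A2) * (\<integral>\<^sup>+t. ennreal (dist y t powr (-(s1+s2))) * indicator (ball y (3*\<eta>)) t \<partial>nu)"
          by (rule int_comb2) auto
        also have "\<dots> \<le> ennreal (A1*A2 * (C\<sigma> * (3*\<eta>) powr (ups - (s1+s2))) + A1*A2 * (C\<sigma> * (3*\<eta>) powr (ups - (s1+s2))))"
          using C\<sigma> x y AA \<eta> by (intro enn_sum2_bound) auto
        also have "\<dots> \<le> ennreal e"
          using \<eta>1(2)[of "3*\<eta>"] \<eta> by (intro ennreal_leI) (auto simp: \<eta>_def algebra_simps)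
        finally show "(\<integral>\<^sup>+t. indicator S t * ennreal (norm (K1 (fst p) t * K2 t (snd p))) \<partial>nu) \<le> ennreal e"
          using peq by simp
      next
        fix p t assume p: "p \<in> Y \<times> Y" and dp: "dist p p0 < \<eta>" and t: "t \<in> space nu - S"
        obtain x y where peq: "p = (x, y)" and x: "x \<in> Y" and y: "y \<in> Y" using p by auto
        have dx: "dist x x0 < \<eta>" using dist_fst_le[of p p0] dp peq p0eq by auto
        have dy: "dist y y0 < \<eta>" using dist_snd_le[of p p0] dp peq p0eq by auto
        have tY: "t \<in> Y" and tS: "dist x0 t \<ge> 2*\<eta>" "dist y0 t \<ge> 2*\<eta>" using t space_nu unfolding S_def by auto
        have a: "dist x t \<ge> \<eta>" using dist_triangle[of x0 t x] dx tS by (simp add: dist_commute)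
        have b: "dist y t \<ge> \<eta>" using dist_triangle[of y0 t y] dy tS by (simp add: dist_commute)
        have tne: "t \<noteq> x" "t \<noteq> y" using a b \<eta> by auto
        have "dist x t powr (-s1) * dist y t powr (-s2) \<le> \<eta> powr (-s1) * \<eta> powr (-s2)"
          using a b \<eta> s1 s2 by (intro mult_mono powr_mono2') auto
        hence "cmod (K1 x t * K2 t y) \<le> A1 * A2 * (\<eta> powr (-s1) * \<eta> powr (-s2))"
          using pw_F[OF x y tY tne] AA by (meson mult_left_mono order_trans)
        thus "norm (K1 (fst p) t * K2 t (snd p)) \<le> A1 * A2 * (\<eta> powr (-s1) * \<eta> powr (-s2))" using peq by simp
      next
        fix t u assume t: "t \<in> space nu - S" and u: "\<forall>n. u n \<in> Y \<times> Y \<and> dist (u n) p0 < \<eta>" and lim: "u \<longlonglongrightarrow> p0"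
        have tY: "t \<in> Y" and tS: "dist x0 t \<ge> 2*\<eta>" "dist y0 t \<ge> 2*\<eta>" using t space_nu unfolding S_def by auto
        have ne: "fst (u n) \<noteq> t \<and> snd (u n) \<noteq> t" for n
        proof -
          have "dist (fst (u n)) x0 < \<eta>" "dist (snd (u n)) y0 < \<eta>"
            using dist_fst_le[of "u n" p0] dist_snd_le[of "u n" p0] u p0eq by (auto intro: le_less_trans)
          thus ?thesis using tS \<eta> by (auto simp: dist_commute)
        qed
        show "(\<lambda>n. K1 (fst (u n)) t * K2 t (snd (u n))) \<longlonglongrightarrow> K1 (fst p0) t * K2 t (snd p0)"
          unfolding p0eq fst_conv snd_conv
          by (rule K_cont_seq[OF x0 y0 tY]) (use tS \<eta> u lim p0eq ne in \<open>auto simp: mem_Times_iff\<close>)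
      qed
    qed
  qed
qed


lemma case_i:
  assumes \<sigma>: "ups \<le> s1 + s2"
  shows "(\<forall>x\<in>Y. \<forall>y\<in>Y. x \<noteq> y \<longrightarrow> integrable nu (\<lambda>t. K1 x t * K2 t y)) \<and>
        continuous_on (offdiag Y) (\<lambda>p. LINT t|nu. K1 (fst p) t * K2 t (snd p)) \<and>
        (s1 + s2 > ups \<longrightarrow> (\<exists>C. \<forall>x\<in>Y. \<forall>y\<in>Y. x \<noteq> y \<longrightarrow>
            cmod (LINT t|nu. K1 x t * K2 t y) * dist x y powr (s1 + s2 - ups) \<le> C)) \<and>
        (s1 + s2 = ups \<longrightarrow> (\<exists>C. \<forall>x\<in>Y. \<forall>y\<in>Y. x \<noteq> y \<longrightarrow>
            cmod (LINT t|nu. K1 x t * K2 t y) / (1 + \<bar>ln (dist x y)\<bar>) \<le> C))"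
proof -
  have AA: "0 \<le> A1 * A2" using A1 A2 by simp
  obtain G1 where G1: "G1 \<ge> 0" "\<And>x. x\<in>Y \<Longrightarrow> (\<integral>\<^sup>+t. ennreal (dist x t powr (-s1)) \<partial>nu) \<le> ennreal G1"
    using global_est[OF s1] by blast
  obtain G2 where G2: "G2 \<ge> 0" "\<And>x. x\<in>Y \<Longrightarrow> (\<integral>\<^sup>+t. ennreal (dist x t powr (-s2)) \<partial>nu) \<le> ennreal G2"
    using global_est[OF s2] by blast
  obtain C1 where C1: "C1 \<ge> 0" "\<And>x \<rho>. x\<in>Y \<Longrightarrow> \<rho> > 0 \<Longrightarrow>
     (\<integral>\<^sup>+t. ennreal (dist x t powr (-s1)) * indicator (ball x \<rho>) t \<partial>nu) \<le> ennreal (C1 * \<rho> powr (ups - s1))"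
    using inner_est[OF s1] by blast
  obtain C2 where C2: "C2 \<ge> 0" "\<And>x \<rho>. x\<in>Y \<Longrightarrow> \<rho> > 0 \<Longrightarrow>
     (\<integral>\<^sup>+t. ennreal (dist x t powr (-s2)) * indicator (ball x \<rho>) t \<partial>nu) \<le> ennreal (C2 * \<rho> powr (ups - s2))"
    using inner_est[OF s2] by blast
  have nnb: "(\<integral>\<^sup>+t. ennreal (cmod (K1 x t * K2 t y)) \<partial>nu)
      \<le> ennreal (A1 * A2 * (dist x y / 2) powr (-s2) * G1 + A1 * A2 * (dist x y / 2) powr (-s1) * G2)"
    if x: "x \<in> Y" and y: "y \<in> Y" and xy: "x \<noteq> y" for x y
  proof -
    define d where "d = dist x y"
    have d: "d > 0" using xy by (simp add: d_def)
    have "(\<integral>\<^sup>+t. ennreal (cmod (K1 x t * K2 t y)) \<partial>nu)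
       \<le> (\<integral>\<^sup>+t. ennreal (A1*A2*(d/2) powr (-s2)) * (ennreal (dist x t powr (-s1)) * indicator UNIV t)
              + ennreal (A1*A2*(d/2) powr (-s1)) * (ennreal (dist y t powr (-s2)) * indicator UNIV t) \<partial>nu)"
    proof (rule nn_mono_AE2[OF x y])
      fix t assume t: "t \<in> Y" "t \<noteq> x" "t \<noteq> y"
      have tri: "d \<le> dist x t + dist y t" unfolding d_def using dist_triangle[of x y t] by (simp add: dist_commute)
      have "cmod (K1 x t * K2 t y) \<le> A1 * A2 * (dist x t powr (-s1) * dist y t powr (-s2))"
        using pw_F[OF x y t] .
      also have "\<dots> \<le> A1 * A2 * ((d/2) powr (-s2) * dist x t powr (-s1) + (d/2) powr (-s1) * dist y t powr (-s2))"
        using t s1 s2 AA d tri by (intro mult_left_mono pw2) auto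
      finally have "cmod (K1 x t * K2 t y) \<le> (A1*A2*(d/2) powr (-s2)) * dist x t powr (-s1) + (A1*A2*(d/2) powr (-s1)) * dist y t powr (-s2)"
        by (simp add: algebra_simps)
      thus "ennreal (cmod (K1 x t * K2 t y)) \<le> ennreal (A1*A2*(d/2) powr (-s2)) * (ennreal (dist x t powr (-s1)) * indicator UNIV t)
              + ennreal (A1*A2*(d/2) powr (-s1)) * (ennreal (dist y t powr (-s2)) * indicator UNIV t)"
        using AA by (simp add: enn_comb2)
    qed
    also have "\<dots> = ennreal (A1*A2*(d/2) powr (-s2)) * (\<integral>\<^sup>+t. ennreal (dist x t powr (-s1)) * indicator UNIV t \<partial>nu)
              + ennreal (A1*A2*(d/2) powr (-s1)) * (\<integral>\<^sup>+t. ennreal (dist y t powr (-s2)) * indicator UNIV t \<partial>nu)"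
      by (rule int_comb2) auto
    also have "\<dots> \<le> ennreal (A1 * A2 * (d / 2) powr (-s2) * G1 + A1 * A2 * (d / 2) powr (-s1) * G2)"
      using G1 G2 x y AA by (intro enn_sum2_bound) auto
    finally show ?thesis by (simp add: d_def)
  qed
  have int: "integrable nu (\<lambda>t. K1 x t * K2 t y)" if "x \<in> Y" "y \<in> Y" "x \<noteq> y" for x y
    using nnb[OF that] F_meas[OF that(1,2)] by (intro integrableI_bounded) (auto simp: top_unique intro: le_less_trans)
  have nnb3: "(\<integral>\<^sup>+t. ennreal (cmod (K1 x t * K2 t y)) \<partial>nu)
      \<le> ennreal (A1*A2*(dist x y/2) powr (-s2)) * (\<integral>\<^sup>+t. ennreal (dist x t powr (-s1)) * indicator (ball x (dist x y/2)) t \<partial>nu)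
       + ennreal (A1*A2*(dist x y/2) powr (-s1)) * (\<integral>\<^sup>+t. ennreal (dist y t powr (-s2)) * indicator (ball y (dist x y/2)) t \<partial>nu)
       + ennreal (A1*A2*3 powr s2) * (\<integral>\<^sup>+t. ennreal (dist x t powr (-(s1+s2))) * indicator (- ball x (dist x y/2)) t \<partial>nu)"
    if x: "x \<in> Y" and y: "y \<in> Y" and xy: "x \<noteq> y" for x y
  proof -
    define d where "d = dist x y"
    have d: "d > 0" using xy by (simp add: d_def)
    have "(\<integral>\<^sup>+t. ennreal (cmod (K1 x t * K2 t y)) \<partial>nu)
      \<le> (\<integral>\<^sup>+t. ennreal (A1*A2*(d/2) powr (-s2)) * (ennreal (dist x t powr (-s1)) * indicator (ball x (d/2)) t)
       + ennreal (A1*A2*(d/2) powr (-s1)) * (ennreal (dist y t powr (-s2)) * indicator (ball y (d/2)) t)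
       + ennreal (A1*A2*3 powr s2) * (ennreal (dist x t powr (-(s1+s2))) * indicator (- ball x (d/2)) t) \<partial>nu)"
    proof (rule nn_mono_AE2[OF x y])
      fix t assume t: "t \<in> Y" "t \<noteq> x" "t \<noteq> y"
      have tri: "d \<le> dist x t + dist y t" unfolding d_def using dist_triangle[of x y t] by (simp add: dist_commute)
      have tri2: "dist x t \<le> dist y t + d" unfolding d_def using dist_triangle[of x t y] by (simp add: dist_commute)
      have "cmod (K1 x t * K2 t y) \<le> A1 * A2 * (dist x t powr (-s1) * dist y t powr (-s2))"
        using pw_F[OF x y t] .
      also have "\<dots> \<le> A1 * A2 * ((if dist x t < d/2 then (d/2) powr (-s2) * dist x t powr (-s1) else 0)
     + (if dist y t < d/2 then (d/2) powr (-s1) * dist y t powr (-s2) else 0)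
     + (if d/2 \<le> dist x t then 3 powr s2 * dist x t powr (-(s1+s2)) else 0))"
        using t s1 s2 AA d tri tri2 by (intro mult_left_mono pw3) auto
      also have "\<dots> = (A1*A2*(d/2) powr (-s2)) * (if dist x t < d/2 then dist x t powr (-s1) else 0)
       + (A1*A2*(d/2) powr (-s1)) * (if dist y t < d/2 then dist y t powr (-s2) else 0)
       + (A1*A2*3 powr s2) * (if \<not> dist x t < d/2 then dist x t powr (-(s1+s2)) else 0)"
        by (simp add: algebra_simps not_less)
      finally have "ennreal (cmod (K1 x t * K2 t y)) \<le> ennreal (A1*A2*(d/2) powr (-s2)) * ennreal (if dist x t < d/2 then dist x t powr (-s1) else 0)
       + ennreal (A1*A2*(d/2) powr (-s1)) * ennreal (if dist y t < d/2 then dist y t powr (-s2) else 0)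
       + ennreal (A1*A2*3 powr s2) * ennreal (if \<not> dist x t < d/2 then dist x t powr (-(s1+s2)) else 0)"
        using AA by (intro enn_comb3) auto
      thus "ennreal (cmod (K1 x t * K2 t y)) \<le> ennreal (A1*A2*(d/2) powr (-s2)) * (ennreal (dist x t powr (-s1)) * indicator (ball x (d/2)) t)
       + ennreal (A1*A2*(d/2) powr (-s1)) * (ennreal (dist y t powr (-s2)) * indicator (ball y (d/2)) t)
       + ennreal (A1*A2*3 powr s2) * (ennreal (dist x t powr (-(s1+s2))) * indicator (- ball x (d/2)) t)"
        unfolding enn_ind mem_ball Compl_iff .
    qed
    also have "\<dots> = ennreal (A1*A2*(d/2) powr (-s2)) * (\<integral>\<^sup>+t. ennreal (dist x t powr (-s1)) * indicator (ball x (d/2)) t \<partial>nu)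
       + ennreal (A1*A2*(d/2) powr (-s1)) * (\<integral>\<^sup>+t. ennreal (dist y t powr (-s2)) * indicator (ball y (d/2)) t \<partial>nu)
       + ennreal (A1*A2*3 powr s2) * (\<integral>\<^sup>+t. ennreal (dist x t powr (-(s1+s2))) * indicator (- ball x (d/2)) t \<partial>nu)"
      by (rule int_comb3) auto
    finally show ?thesis by (simp add: d_def)
  qed
  show ?thesis
  proof (intro conjI ballI impI)
    show "integrable nu (\<lambda>t. K1 x t * K2 t y)" if "x \<in> Y" "y \<in> Y" "x \<noteq> y" for x y using int that by auto
  next
    assume gt: "s1 + s2 > ups"
    obtain Ct where Ct: "Ct \<ge> 0" "\<And>x \<rho>. x\<in>Y \<Longrightarrow> \<rho> > 0 \<Longrightarrow>
      (\<integral>\<^sup>+t. ennreal (dist x t powr (-(s1+s2))) * indicator (- ball x \<rho>) t \<partial>nu) \<le> ennreal (Ct * \<rho> powr (ups - (s1+s2)))"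
      using outer_gt[OF gt] by blast
    define K where "K = A1 * A2 * (C1 + C2 + 3 powr s2 * Ct)"
    have K: "K \<ge> 0" using AA C1 C2 Ct by (simp add: K_def)
    show "\<exists>C. \<forall>x\<in>Y. \<forall>y\<in>Y. x \<noteq> y \<longrightarrow> cmod (LINT t|nu. K1 x t * K2 t y) * dist x y powr (s1 + s2 - ups) \<le> C"
    proof (intro exI[of _ "K * 2 powr (s1 + s2 - ups)"] ballI impI)
      fix x y assume x: "x \<in> Y" and y: "y \<in> Y" and xy: "x \<noteq> y"
      define d where "d = dist x y"
      have d: "d > 0" using xy by (simp add: d_def)
      have e1: "(d/2) powr (-s2) * (d/2) powr (ups - s1) = (d/2) powr (ups - (s1+s2))" by (simp add: powr_add[symmetric] algebra_simps)
      have e2: "(d/2) powr (-s1) * (d/2) powr (ups - s2) = (d/2) powr (ups - (s1+s2))" by (simp add: powr_add[symmetric] algebra_simps)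
      have "(\<integral>\<^sup>+t. ennreal (cmod (K1 x t * K2 t y)) \<partial>nu)
         \<le> ennreal (A1*A2*(d/2) powr (-s2) * (C1 * (d/2) powr (ups - s1)) + A1*A2*(d/2) powr (-s1) * (C2 * (d/2) powr (ups - s2))
              + A1*A2*3 powr s2 * (Ct * (d/2) powr (ups - (s1+s2))))"
        using nnb3[OF x y xy] unfolding d_def[symmetric]
        by (rule order_trans) (intro enn_sum3_bound C1 C2 Ct x y; use AA C1 C2 Ct d in auto)
      also have "\<dots> = ennreal (K * (d/2) powr (ups - (s1+s2)))"
      proof -
        have r1: "A1*A2*(d/2) powr (-s2) * (C1 * (d/2) powr (ups - s1)) = A1*A2*C1 * (d/2) powr (ups - (s1+s2))"
          unfolding e1[symmetric] by (simp add: mult_ac)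
        have r2: "A1*A2*(d/2) powr (-s1) * (C2 * (d/2) powr (ups - s2)) = A1*A2*C2 * (d/2) powr (ups - (s1+s2))"
          unfolding e2[symmetric] by (simp add: mult_ac)
        show ?thesis unfolding K_def r1 r2 by (simp add: algebra_simps)
      qed
      finally have nb: "(\<integral>\<^sup>+t. ennreal (cmod (K1 x t * K2 t y)) \<partial>nu) \<le> ennreal (K * (d/2) powr (ups - (s1+s2)))" .
      have cb: "cmod (LINT t|nu. K1 x t * K2 t y) \<le> K * (d/2) powr (ups - (s1+s2))"
        using K by (intro lint_bound[OF int[OF x y xy] nb]) simp
      have "cmod (LINT t|nu. K1 x t * K2 t y) * d powr (s1 + s2 - ups) \<le> K * (d/2) powr (ups - (s1+s2)) * d powr (s1 + s2 - ups)"
        using cb by (intro mult_right_mono) auto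
      also have "K * (d/2) powr (ups - (s1+s2)) * d powr (s1 + s2 - ups) = K * 2 powr (s1 + s2 - ups)"
      proof -
        have "K * (d/2) powr (ups - (s1+s2)) * d powr (s1 + s2 - ups)
            = K * (d powr (ups - (s1+s2)) * d powr (s1 + s2 - ups)) / 2 powr (ups - (s1+s2))"
          using d by (simp add: powr_divide)
        also have "d powr (ups - (s1+s2)) * d powr (s1 + s2 - ups) = 1"
          using d by (simp add: powr_add[symmetric])
        also have "K * 1 / 2 powr (ups - (s1+s2)) = K * 2 powr (s1 + s2 - ups)"
          by (simp add: powr_minus_divide[symmetric] divide_inverse powr_minus[symmetric])
        finally show ?thesis .
      qed
      finally show "cmod (LINT t|nu. K1 x t * K2 t y) * dist x y powr (s1 + s2 - ups) \<le> K * 2 powr (s1 + s2 - ups)"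
        by (simp add: d_def)
    qed
  next
    assume eq: "s1 + s2 = ups"
    obtain Ce where Ce: "Ce \<ge> 0" "\<And>x \<rho>. x\<in>Y \<Longrightarrow> \<rho> > 0 \<Longrightarrow>
      (\<integral>\<^sup>+t. ennreal (dist x t powr (-ups)) * indicator (- ball x \<rho>) t \<partial>nu) \<le> ennreal (Ce * (1 + \<bar>ln \<rho>\<bar>))"
      using outer_eq by blast
    define K where "K = A1 * A2 * (C1 + C2) + A1 * A2 * 3 powr s2 * Ce * (1 + ln 2)"
    show "\<exists>C. \<forall>x\<in>Y. \<forall>y\<in>Y. x \<noteq> y \<longrightarrow> cmod (LINT t|nu. K1 x t * K2 t y) / (1 + \<bar>ln (dist x y)\<bar>) \<le> C"
    proof (intro exI[of _ K] ballI impI)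
      fix x y assume x: "x \<in> Y" and y: "y \<in> Y" and xy: "x \<noteq> y"
      define d where "d = dist x y"
      have d: "d > 0" using xy by (simp add: d_def)
      have e1: "(d/2) powr (-s2) * (d/2) powr (ups - s1) = 1" using d by (simp add: powr_add[symmetric] eq[symmetric])
      have e2: "(d/2) powr (-s1) * (d/2) powr (ups - s2) = 1" using d by (simp add: powr_add[symmetric] eq[symmetric])
      have Ce': "(\<integral>\<^sup>+t. ennreal (dist x t powr (-(s1+s2))) * indicator (- ball x (d/2)) t \<partial>nu) \<le> ennreal (Ce * (1 + \<bar>ln (d/2)\<bar>))"
        using Ce(2)[OF x, of "d/2"] d eq by simp
      have "(\<integral>\<^sup>+t. ennreal (cmod (K1 x t * K2 t y)) \<partial>nu)
         \<le> ennreal (A1*A2*(d/2) powr (-s2) * (C1 * (d/2) powr (ups - s1)) + A1*A2*(d/2) powr (-s1) * (C2 * (d/2) powr (ups - s2))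
              + A1*A2*3 powr s2 * (Ce * (1 + \<bar>ln (d/2)\<bar>)))"
        using nnb3[OF x y xy] unfolding d_def[symmetric]
        by (rule order_trans) (intro enn_sum3_bound C1 C2 Ce' x y; use AA C1 C2 Ce d in auto)
      also have "\<dots> = ennreal (A1*A2*(C1 + C2) + A1*A2*3 powr s2 * Ce * (1 + \<bar>ln (d/2)\<bar>))"
      proof -
        have "A1*A2*(d/2) powr (-s2) * (C1 * (d/2) powr (ups - s1)) = A1*A2*C1 * ((d/2) powr (-s2) * (d/2) powr (ups - s1))"
          by (simp add: mult_ac)
        hence r1: "A1*A2*(d/2) powr (-s2) * (C1 * (d/2) powr (ups - s1)) = A1*A2*C1" unfolding e1 by simp
        have "A1*A2*(d/2) powr (-s1) * (C2 * (d/2) powr (ups - s2)) = A1*A2*C2 * ((d/2) powr (-s1) * (d/2) powr (ups - s2))"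
          by (simp add: mult_ac)
        hence r2: "A1*A2*(d/2) powr (-s1) * (C2 * (d/2) powr (ups - s2)) = A1*A2*C2" unfolding e2 by simp
        show ?thesis unfolding r1 r2 by (simp add: algebra_simps)
      qed
      also have "\<dots> \<le> ennreal (K * (1 + \<bar>ln d\<bar>))"
      proof (rule ennreal_leI)
        have l2: "0 \<le> ln (2::real)" by simp
        have l: "\<bar>ln (d/2)\<bar> \<le> \<bar>ln d\<bar> + ln 2" using d l2 abs_triangle_ineq4[of "ln d" "ln 2"] by (simp add: ln_div)
        have "1 + \<bar>ln (d/2)\<bar> \<le> (1 + ln 2) * (1 + \<bar>ln d\<bar>)"
        proof -
          have "(1 + ln 2) * (1 + \<bar>ln d\<bar>) = 1 + \<bar>ln d\<bar> + ln 2 + ln 2 * \<bar>ln d\<bar>" by (simp add: algebra_simps)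
          moreover have "0 \<le> ln (2::real) * \<bar>ln d\<bar>" by simp
          ultimately show ?thesis using l by linarith
        qed
        hence a: "A1*A2*3 powr s2 * Ce * (1 + \<bar>ln (d/2)\<bar>) \<le> A1*A2*3 powr s2 * Ce * ((1 + ln 2) * (1 + \<bar>ln d\<bar>))"
          using AA Ce by (intro mult_left_mono) auto
        have b: "A1*A2*(C1 + C2) \<le> A1*A2*(C1 + C2) * (1 + \<bar>ln d\<bar>)"
        proof -
          have "0 \<le> A1*A2*(C1 + C2)" using AA C1(1) C2(1) by simp
          hence "A1*A2*(C1 + C2) * 1 \<le> A1*A2*(C1 + C2) * (1 + \<bar>ln d\<bar>)" by (intro mult_left_mono) auto
          thus ?thesis by simp
        qed
        show "A1*A2*(C1 + C2) + A1*A2*3 powr s2 * Ce * (1 + \<bar>ln (d/2)\<bar>) \<le> K * (1 + \<bar>ln d\<bar>)"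
          using a b unfolding K_def by (simp add: algebra_simps)
      qed
      finally have nb: "(\<integral>\<^sup>+t. ennreal (cmod (K1 x t * K2 t y)) \<partial>nu) \<le> ennreal (K * (1 + \<bar>ln d\<bar>))" .
      have K: "K \<ge> 0" using AA C1 C2 Ce by (simp add: K_def)
      have cb: "cmod (LINT t|nu. K1 x t * K2 t y) \<le> K * (1 + \<bar>ln d\<bar>)"
        using K by (intro lint_bound[OF int[OF x y xy] nb]) simp
      thus "cmod (LINT t|nu. K1 x t * K2 t y) / (1 + \<bar>ln (dist x y)\<bar>) \<le> K"
        unfolding d_def[symmetric] by (simp add: divide_le_eq add_pos_nonneg)
    qed
  next
    show "continuous_on (offdiag Y) (\<lambda>p. LINT t|nu. K1 (fst p) t * K2 t (snd p))"
    proof (rule cont_param_integral[OF finite_nu])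
      show "integrable nu (\<lambda>t. K1 (fst p) t * K2 t (snd p))" if "p \<in> offdiag Y" for p
        using int that by (auto simp: offdiag_def)
    next
      fix p0 :: "'a \<times> 'a" and e :: real assume p0: "p0 \<in> offdiag Y" and e: "e > 0"
      obtain x0 y0 where p0eq: "p0 = (x0, y0)" and x0: "x0 \<in> Y" and y0: "y0 \<in> Y" and x0y0: "x0 \<noteq> y0"
        using p0 by (cases p0) (auto simp: offdiag_def)
      define \<delta>0 where "\<delta>0 = dist x0 y0"
      have \<delta>0: "\<delta>0 > 0" using x0y0 by (simp add: \<delta>0_def)
      define D where "D = \<delta>0 / 4"
      have D: "D > 0" using \<delta>0 by (simp add: D_def)
      have e2: "e/2 > 0" using e by simp
      obtain \<eta>1 where \<eta>1: "\<eta>1 > 0" "\<And>r. 0 < r \<and> r \<le> \<eta>1 \<Longrightarrow> (A1 * A2 * D powr (-s2) * C1) * r powr (ups - s1) \<le> e/2"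
        using small_powr_aux[OF e2, of "ups - s1"] s1 by auto
      obtain \<eta>2 where \<eta>2: "\<eta>2 > 0" "\<And>r. 0 < r \<and> r \<le> \<eta>2 \<Longrightarrow> (A1 * A2 * D powr (-s1) * C2) * r powr (ups - s2) \<le> e/2"
        using small_powr_aux[OF e2, of "ups - s2"] s2 by auto
      define \<eta> where "\<eta> = min (min \<eta>1 \<eta>2 / 3) (\<delta>0 / 8)"
      have \<eta>: "\<eta> > 0" using \<eta>1 \<eta>2 \<delta>0 by (simp add: \<eta>_def)
      have \<eta>3: "3*\<eta> \<le> \<eta>1" "3*\<eta> \<le> \<eta>2" "\<eta> \<le> \<delta>0/8" by (auto simp: \<eta>_def)
      define S where "S = (ball x0 (2*\<eta>) \<union> ball y0 (2*\<eta>)) \<inter> Y"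
      have S: "S \<in> sets nu" unfolding S_def by (intro set_transfer) auto
      show "\<exists>\<delta>>0. \<exists>S\<in>sets nu. \<exists>B.
        (\<forall>p\<in>offdiag Y. dist p p0 < \<delta> \<longrightarrow> (\<integral>\<^sup>+t. indicator S t * ennreal (norm (K1 (fst p) t * K2 t (snd p))) \<partial>nu) \<le> ennreal e) \<and>
        (\<forall>p\<in>offdiag Y. dist p p0 < \<delta> \<longrightarrow> (\<forall>t\<in>space nu - S. norm (K1 (fst p) t * K2 t (snd p)) \<le> B)) \<and>
        (\<forall>t\<in>space nu - S. \<forall>u. (\<forall>n. u n \<in> offdiag Y \<and> dist (u n) p0 < \<delta>) \<longrightarrow> u \<longlonglongrightarrow> p0 \<longrightarrow> (\<lambda>n. K1 (fst (u n)) t * K2 t (snd (u n))) \<longlonglongrightarrow> K1 (fst p0) t * K2 t (snd p0))"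
      proof (rule exI[of _ \<eta>], rule conjI[OF \<eta>], rule bexI[OF _ S], rule exI[of _ "A1 * A2 * (\<eta> powr (-s1) * \<eta> powr (-s2))"], intro conjI ballI impI allI)
        fix p assume p: "p \<in> offdiag Y" and dp: "dist p p0 < \<eta>"
        obtain x y where peq: "p = (x, y)" and x: "x \<in> Y" and y: "y \<in> Y" using p by (cases p) (auto simp: offdiag_def)
        have dx: "dist x x0 < \<eta>" using dist_fst_le[of p p0] dp peq p0eq by auto
        have dy: "dist y y0 < \<eta>" using dist_snd_le[of p p0] dp peq p0eq by auto
        have "(\<integral>\<^sup>+t. indicator S t * ennreal (norm (K1 x t * K2 t y)) \<partial>nu)
          \<le> (\<integral>\<^sup>+t. ennreal (A1*A2*D powr (-s2)) * (ennreal (dist x t powr (-s1)) * indicator (ball x (3*\<eta>)) t)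
              + ennreal (A1*A2*D powr (-s1)) * (ennreal (dist y t powr (-s2)) * indicator (ball y (3*\<eta>)) t) \<partial>nu)"
        proof (rule nn_mono_AE2[OF x y])
          fix t assume t: "t \<in> Y" "t \<noteq> x" "t \<noteq> y"
          show "indicator S t * ennreal (norm (K1 x t * K2 t y)) \<le> ennreal (A1*A2*D powr (-s2)) * (ennreal (dist x t powr (-s1)) * indicator (ball x (3*\<eta>)) t)
              + ennreal (A1*A2*D powr (-s1)) * (ennreal (dist y t powr (-s2)) * indicator (ball y (3*\<eta>)) t)"
          proof (cases "t \<in> S")
            case False thus ?thesis by simp
          next
            case True
            have tri1: "\<delta>0 \<le> dist x0 t + dist y t + dist y y0"
              unfolding \<delta>0_def using dist_triangle[of x0 y0 t] dist_triangle[of t y0 y] by (simp add: dist_commute)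
            have tri2: "\<delta>0 \<le> dist x x0 + dist x t + dist y0 t"
              unfolding \<delta>0_def using dist_triangle[of x0 y0 t] dist_triangle[of x0 t x] by (simp add: dist_commute)
            have "(dist x t < 3*\<eta> \<and> D \<le> dist y t) \<or> (dist y t < 3*\<eta> \<and> D \<le> dist x t)"
            proof (cases "t \<in> ball x0 (2*\<eta>)")
              case True
              hence "dist x0 t < 2*\<eta>" by simp
              moreover have "dist x t \<le> dist x x0 + dist x0 t" by (rule dist_triangle)
              ultimately have "dist x t < 3*\<eta>" "D \<le> dist y t" using dx dy tri1 \<eta>3 \<delta>0 unfolding D_def by linarith+
              thus ?thesis by blast
            next
              case False
              hence "dist y0 t < 2*\<eta>" using \<open>t \<in> S\<close> unfolding S_def by auto
              moreover have "dist y t \<le> dist y y0 + dist y0 t" by (rule dist_triangle)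
              ultimately have "dist y t < 3*\<eta>" "D \<le> dist x t" using dx dy tri2 \<eta>3 \<delta>0 unfolding D_def by linarith+
              thus ?thesis by blast
            qed
            hence "dist x t powr (-s1) * dist y t powr (-s2) \<le> (if dist x t < 3*\<eta> then D powr (-s2) * dist x t powr (-s1) else 0)
                    + (if dist y t < 3*\<eta> then D powr (-s1) * dist y t powr (-s2) else 0)"
              using t s1 s2 D by (intro pw5) auto
            hence "cmod (K1 x t * K2 t y) \<le> A1 * A2 * ((if dist x t < 3*\<eta> then D powr (-s2) * dist x t powr (-s1) else 0)
                    + (if dist y t < 3*\<eta> then D powr (-s1) * dist y t powr (-s2) else 0))"
              using pw_F[OF x y t] AA by (meson mult_left_mono order_trans)
            also have "\<dots> = (A1*A2*D powr (-s2)) * (if dist x t < 3*\<eta> then dist x t powr (-s1) else 0)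
                    + (A1*A2*D powr (-s1)) * (if dist y t < 3*\<eta> then dist y t powr (-s2) else 0)"
              by (simp add: algebra_simps)
            finally have "ennreal (cmod (K1 x t * K2 t y)) \<le> ennreal (A1*A2*D powr (-s2)) * ennreal (if dist x t < 3*\<eta> then dist x t powr (-s1) else 0)
                    + ennreal (A1*A2*D powr (-s1)) * ennreal (if dist y t < 3*\<eta> then dist y t powr (-s2) else 0)"
              using AA by (intro enn_comb2) auto
            thus ?thesis using True unfolding enn_ind mem_ball by simp
          qed
        qed
        also have "\<dots> = ennreal (A1*A2*D powr (-s2)) * (\<integral>\<^sup>+t. ennreal (dist x t powr (-s1)) * indicator (ball x (3*\<eta>)) t \<partial>nu)
              + ennreal (A1*A2*D powr (-s1)) * (\<integral>\<^sup>+t. ennreal (dist y t powr (-s2)) * indicator (ball y (3*\<eta>)) t \<partial>nu)"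
          by (rule int_comb2) auto
        also have "\<dots> \<le> ennreal (A1*A2*D powr (-s2) * (C1 * (3*\<eta>) powr (ups - s1)) + A1*A2*D powr (-s1) * (C2 * (3*\<eta>) powr (ups - s2)))"
          using C1 C2 x y AA \<eta> by (intro enn_sum2_bound) auto
        also have "\<dots> \<le> ennreal e"
        proof (rule ennreal_leI)
          have "(A1 * A2 * D powr (-s2) * C1) * (3*\<eta>) powr (ups - s1) \<le> e/2" using \<eta>1(2)[of "3*\<eta>"] \<eta> \<eta>3 by auto
          moreover have "(A1 * A2 * D powr (-s1) * C2) * (3*\<eta>) powr (ups - s2) \<le> e/2" using \<eta>2(2)[of "3*\<eta>"] \<eta> \<eta>3 by auto
          ultimately show "A1*A2*D powr (-s2) * (C1 * (3*\<eta>) powr (ups - s1)) + A1*A2*D powr (-s1) * (C2 * (3*\<eta>) powr (ups - s2)) \<le> e"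
            by (simp add: mult_ac)
        qed
        finally show "(\<integral>\<^sup>+t. indicator S t * ennreal (norm (K1 (fst p) t * K2 t (snd p))) \<partial>nu) \<le> ennreal e"
          using peq by simp
      next
        fix p t assume p: "p \<in> offdiag Y" and dp: "dist p p0 < \<eta>" and t: "t \<in> space nu - S"
        obtain x y where peq: "p = (x, y)" and x: "x \<in> Y" and y: "y \<in> Y" using p by (cases p) (auto simp: offdiag_def)
        have dx: "dist x x0 < \<eta>" using dist_fst_le[of p p0] dp peq p0eq by auto
        have dy: "dist y y0 < \<eta>" using dist_snd_le[of p p0] dp peq p0eq by auto
        have tY: "t \<in> Y" and tS: "dist x0 t \<ge> 2*\<eta>" "dist y0 t \<ge> 2*\<eta>" using t space_nu unfolding S_def by auto
        have a: "dist x t \<ge> \<eta>" using dist_triangle[of x0 t x] dx tS by (simp add: dist_commute)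
        have b: "dist y t \<ge> \<eta>" using dist_triangle[of y0 t y] dy tS by (simp add: dist_commute)
        have tne: "t \<noteq> x" "t \<noteq> y" using a b \<eta> by auto
        have "dist x t powr (-s1) * dist y t powr (-s2) \<le> \<eta> powr (-s1) * \<eta> powr (-s2)"
          using a b \<eta> s1 s2 by (intro mult_mono powr_mono2') auto
        hence "cmod (K1 x t * K2 t y) \<le> A1 * A2 * (\<eta> powr (-s1) * \<eta> powr (-s2))"
          using pw_F[OF x y tY tne] AA by (meson mult_left_mono order_trans)
        thus "norm (K1 (fst p) t * K2 t (snd p)) \<le> A1 * A2 * (\<eta> powr (-s1) * \<eta> powr (-s2))" using peq by simp
      next
        fix t u assume t: "t \<in> space nu - S" and u: "\<forall>n. u n \<in> offdiag Y \<and> dist (u n) p0 < \<eta>" and lim: "u \<longlonglongrightarrow> p0"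
        have tY: "t \<in> Y" and tS: "dist x0 t \<ge> 2*\<eta>" "dist y0 t \<ge> 2*\<eta>" using t space_nu unfolding S_def by auto
        have ne: "fst (u n) \<noteq> t \<and> snd (u n) \<noteq> t" for n
        proof -
          have "dist (fst (u n)) x0 < \<eta>" "dist (snd (u n)) y0 < \<eta>"
            using dist_fst_le[of "u n" p0] dist_snd_le[of "u n" p0] u p0eq by (auto intro: le_less_trans)
          thus ?thesis using tS \<eta> by (auto simp: dist_commute)
        qed
        show "(\<lambda>n. K1 (fst (u n)) t * K2 t (snd (u n))) \<longlonglongrightarrow> K1 (fst p0) t * K2 t (snd p0)"
          unfolding p0eq fst_conv snd_conv
          by (rule K_cont_seq[OF x0 y0 tY]) (use tS \<eta> u lim p0eq ne in \<open>auto simp: offdiag_def\<close>)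
      qed
    qed
  qed
qed

end


theorem theorem4p2:
  fixes Y :: "'a::metric_space set" and nu :: "'a measure"
    and ups s1 s2 :: real and K1 K2 :: "'a \<Rightarrow> 'a \<Rightarrow> complex"
  assumes space_nu: "space nu = Y"
    and borel_sets: "sets (restrict_space borel Y) \<subseteq> sets nu"
    and finite_nu: "emeasure nu Y < \<infinity>"
    and ups_pos: "0 < ups"
    and ahlfors: "upper_ahlfors_regular nu Y ups"
    and s1: "0 \<le> s1" "s1 < ups" and s2: "0 \<le> s2" "s2 < ups"
    and strong: "s1 + s2 = ups \<Longrightarrow> strongly_upper_ahlfors_regular nu Y ups"
    and K1: "K1 \<in> kernel_class s1 Y" and K2: "K2 \<in> kernel_class s2 Y"
  shows
    "(s1 + s2 \<ge> ups \<longrightarrow>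
        (\<forall>x\<in>Y. \<forall>y\<in>Y. x \<noteq> y \<longrightarrow> integrable nu (\<lambda>t. K1 x t * K2 t y)) \<and>
        continuous_on (offdiag Y) (\<lambda>p. LINT t|nu. K1 (fst p) t * K2 t (snd p)) \<and>
        (s1 + s2 > ups \<longrightarrow> (\<exists>C. \<forall>x\<in>Y. \<forall>y\<in>Y. x \<noteq> y \<longrightarrow>
            cmod (LINT t|nu. K1 x t * K2 t y) * dist x y powr (s1 + s2 - ups) \<le> C)) \<and>
        (s1 + s2 = ups \<longrightarrow> (\<exists>C. \<forall>x\<in>Y. \<forall>y\<in>Y. x \<noteq> y \<longrightarrow>
            cmod (LINT t|nu. K1 x t * K2 t y) / (1 + \<bar>ln (dist x y)\<bar>) \<le> C)))
     \<and>
     (s1 + s2 < ups \<longrightarrow>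
        (\<forall>x\<in>Y. \<forall>y\<in>Y. integrable nu (\<lambda>t. K1 x t * K2 t y)) \<and>
        continuous_on (Y \<times> Y) (\<lambda>p. LINT t|nu. K1 (fst p) t * K2 t (snd p)) \<and>
        (\<exists>C. \<forall>x\<in>Y. \<forall>y\<in>Y.
            cmod (LINT t|nu. K1 x t * K2 t y) / (1 + dist x y powr (ups - (s1 + s2))) \<le> C))"
  proof -
  obtain r0 :: ereal and c0 :: real where r0: "r0 > 0" and c0: "c0 > 0"
    and ahl: "\<And>x r. x \<in> Y \<Longrightarrow> 0 < r \<Longrightarrow> ereal r < r0 \<Longrightarrow> emeasure nu (ball x r \<inter> Y) \<le> ennreal (c0 * r powr ups)"
    using ahlfors unfolding upper_ahlfors_regular_def by blast
  define r1 where "r1 = real_of_ereal (min r0 1)"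
  have m0: "0 < min r0 1" using r0 by simp
  have m1: "min r0 1 \<le> 1" by simp
  have lt: "min r0 1 < \<infinity>" using le_less_trans[OF m1, of \<infinity>] by simp
  have fin: "\<bar>min r0 1\<bar> \<noteq> \<infinity>" using m0 lt by (simp add: abs_ereal_pos less_imp_le)
  have r1e: "ereal r1 = min r0 1" unfolding r1_def using fin by (simp add: ereal_real)
  have "(0::ereal) < ereal r1" using r1e m0 by simp
  hence r1: "0 < r1" by simp
  have ahl1: "\<And>x r. x \<in> Y \<Longrightarrow> 0 < r \<Longrightarrow> r < r1 \<Longrightarrow> emeasure nu (ball x r \<inter> Y) \<le> ennreal (c0 * r powr ups)"
  proof -
    fix x r assume xr: "x \<in> Y" "0 < r" "r < r1"
    have "ereal r < ereal r1" using xr by simp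
    also have "\<dots> \<le> r0" unfolding r1e by simp
    finally have "ereal r < r0" .
    thus "emeasure nu (ball x r \<inter> Y) \<le> ennreal (c0 * r powr ups)" using ahl xr by blast
  qed
  obtain A1 where A1: "A1 \<ge> 0" "\<And>x y. x\<in>Y \<Longrightarrow> y\<in>Y \<Longrightarrow> x \<noteq> y \<Longrightarrow> cmod (K1 x y) \<le> A1 * dist x y powr (-s1)"
    using kernel_bound[OF K1] by blast
  obtain A2 where A2: "A2 \<ge> 0" "\<And>x y. x\<in>Y \<Longrightarrow> y\<in>Y \<Longrightarrow> x \<noteq> y \<Longrightarrow> cmod (K2 x y) \<le> A2 * dist x y powr (-s2)"
    using kernel_bound[OF K2] by blast
  interpret tk: two_kernels nu Y ups r1 c0 K1 K2 s1 s2 A1 A2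
  proof (unfold_locales)
    show "space nu = Y" by (rule space_nu)
    show "sets (restrict_space borel Y) \<subseteq> sets nu" by (rule borel_sets)
    show "emeasure nu Y < \<infinity>" by (rule finite_nu)
    show "0 < ups" by (rule ups_pos)
    show "0 < r1" by (rule r1)
    show "0 < c0" by (rule c0)
    show "\<And>x r. x \<in> Y \<Longrightarrow> 0 < r \<Longrightarrow> r < r1 \<Longrightarrow> emeasure nu (ball x r \<inter> Y) \<le> ennreal (c0 * r powr ups)"
      by (rule ahl1)
    show "0 \<le> s1" "s1 < ups" by (rule s1(1), rule s1(2))
    show "0 \<le> s2" "s2 < ups" by (rule s2(1), rule s2(2))
    show "K1 \<in> kernel_class s1 Y" by (rule K1)
    show "K2 \<in> kernel_class s2 Y" by (rule K2)
    show "0 \<le> A1" by (rule A1(1))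
    show "\<And>x y. x\<in>Y \<Longrightarrow> y\<in>Y \<Longrightarrow> x \<noteq> y \<Longrightarrow> cmod (K1 x y) \<le> A1 * dist x y powr (-s1)" by (rule A1(2))
    show "0 \<le> A2" by (rule A2(1))
    show "\<And>x y. x\<in>Y \<Longrightarrow> y\<in>Y \<Longrightarrow> x \<noteq> y \<Longrightarrow> cmod (K2 x y) \<le> A2 * dist x y powr (-s2)" by (rule A2(2))
  qed
  show ?thesis
    apply (rule conjI)
     apply (rule impI, erule tk.case_i)
    apply (rule impI, erule tk.case_ii)
    done
qed

end
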